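(* Let $X$ be a vector field on $\mathbb{S}^1$. Then: (1) if $X$ is continuous, then $\mathcal{E}_X^+$ and $\mathcal{E}_X^-$ extend continuously to $X$; (2) if $X$ is lower semicontinuous, then $\mathcal{E}_X^-$ extends radially to $X$; (3) if $X$ is upper semicontinuous, then $\mathcal{E}_X^+$ extends radially to $X$.
   Context: $\mathbb{R}^{1,2}$ is $\mathbb{R}^3$ with $\langle x,y\rangle=-x_0y_0+x_1y_1+x_2y_2$; $\Pi(x_0,x_1,x_2)=(x_1/x_0,x_2/x_0)$ identifies $\mathbb{H}^2$ with the Klein disk $\mathbb{D}^2$, boundary $\mathbb{S}^1$. The Minkowski cross product satisfies $\langle x\boxtimes y,v\rangle=\det(x,y,v)$ for all $v$. A vector field $X$ on $\mathbb{S}^1$ is written $X(z)=iz\phi_X(z)$, $\phi_X:\mathbb{S}^1\to\mathbb{R}$; $X$ is lower/upper semicontinuous if $\phi_X$ is. For $\eta\in\overline{\mathbb{D}^2}$, $\phi_X^-(\eta)=\sup\{a(\eta):a\text{ affine on }\mathbb{R}^2,a|_{\mathbb{S}^1}\le\phi_X\}$ and $\phi_X^+(\eta)=\inf\{a(\eta):a\text{ affine},a|_{\mathbb{S}^1}\ge\phi_X\}$. For $\eta\in\mathbb{D}^2$ let $\Sigma^-(\eta)$ be the set of $\sigma\in\mathbb{R}^{1,2}$ with $\langle(1,\xi),\sigma\rangle\le\phi_X^-(\xi)$ for all $\xi\in\mathbb{D}^2$ and equality at $\xi=\eta$ (i.e. the plane $t=\langle(1,\xi),\sigma\rangle$ in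 $\mathbb{D}^2\times\mathbb{R}$ is a support plane of the epigraph of $\phi_X^-$ at $(\eta,\phi_X^-(\eta))$), and $\Sigma^+(\eta)$ the analogous set with $\ge\phi_X^+$. (For $X$ lower, resp. upper, semicontinuous, $\Sigma^-(\eta)$, resp. $\Sigma^+(\eta)$, is always a single point or a compact segment.) Define $\mathcal{E}_X^\pm(\eta)=\mathrm{d}_{(1,\eta)}\Pi((1,\eta)\boxtimes\sigma^\pm(\eta))$, where $\sigma^\pm(\eta)$ is the unique element of $\Sigma^\pm(\eta)$ if it is a point and the midpoint of $\Sigma^\pm(\eta)$ if it is a segment. A vector field $\hat X$ on $\mathbb{D}^2$ extends continuously to $X$ if $\hat X(\eta_n)\to X(z)$ whenever $\eta_n\in\mathbb{D}^2$, $\eta_n\to z\in\mathbb{S}^1$; it extends radially to $X$ if $\lim_{s\to0^+}\hat X((1-s)z+sx)=X(z)$ for all $z\in\mathbb{S}^1$, $x\in\mathbb{D}^2$. *)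

theory Defs
  imports "HOL-Analysis.Analysis"
begin

(* The unit circle S^1 and the open (Klein) disk D^2 are modelled in the complex plane:
   S^1 = sphere 0 1, D^2 = ball 0 1. Minkowski space R^{1,2} is real^3 with coordinates
   x$1 = x_0, x$2 = x_1, x$3 = x_2. *)

definition mink :: "real^3 \<Rightarrow> real^3 \<Rightarrow> real" where
  "mink x y = - x$1 * y$1 + x$2 * y$2 + x$3 * y$3"

definition mcross :: "real^3 \<Rightarrow> real^3 \<Rightarrow> real^3" where
  "mcross x y = (THE w. \<forall>v. mink w v = det (vector [x, y, v] :: real^3^3))"

definition lift :: "complex \<Rightarrow> real^3" where
  "lift \<eta> = vector [1, Re \<eta>, Im \<eta>]"

definition Pi_proj :: "real^3 \<Rightarrow> complex" where
  "Pi_proj x = Complex (x$2 / x$1) (x$3 / x$1)"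

(* a vector field on S^1 is tangent: X z = i z phi_X z with phi_X real *)
definition tangent_field :: "(complex \<Rightarrow> complex) \<Rightarrow> bool" where
  "tangent_field X \<longleftrightarrow> (\<forall>z\<in>sphere 0 1. X z / (\<i> * z) \<in> \<real>)"

definition phiX :: "(complex \<Rightarrow> complex) \<Rightarrow> complex \<Rightarrow> real" where
  "phiX X z = Re (X z / (\<i> * z))"

definition lsc_on :: "complex set \<Rightarrow> (complex \<Rightarrow> real) \<Rightarrow> bool" where
  "lsc_on S f \<longleftrightarrow> (\<forall>a. openin (top_of_set S) {z\<in>S. a < f z})"

definition usc_on :: "complex set \<Rightarrow> (complex \<Rightarrow> real) \<Rightarrow> bool" where
  "usc_on S f \<longleftrightarrow> (\<forall>a. openin (top_of_set S) {z\<in>S. f z < a})"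

definition phi_minus :: "(complex \<Rightarrow> complex) \<Rightarrow> complex \<Rightarrow> real" where
  "phi_minus X \<eta> = Sup {c + b1 * Re \<eta> + b2 * Im \<eta> | c b1 b2.
      \<forall>z\<in>sphere 0 1. c + b1 * Re z + b2 * Im z \<le> phiX X z}"

definition phi_plus :: "(complex \<Rightarrow> complex) \<Rightarrow> complex \<Rightarrow> real" where
  "phi_plus X \<eta> = Inf {c + b1 * Re \<eta> + b2 * Im \<eta> | c b1 b2.
      \<forall>z\<in>sphere 0 1. c + b1 * Re z + b2 * Im z \<ge> phiX X z}"

definition Sigma_minus :: "(complex \<Rightarrow> complex) \<Rightarrow> complex \<Rightarrow> (real^3) set" where
  "Sigma_minus X \<eta> = {\<sigma>. (\<forall>\<xi>\<in>ball 0 1. mink (lift \<xi>) \<sigma> \<le> phi_minus X \<xi>)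
      \<and> mink (lift \<eta>) \<sigma> = phi_minus X \<eta>}"

definition Sigma_plus :: "(complex \<Rightarrow> complex) \<Rightarrow> complex \<Rightarrow> (real^3) set" where
  "Sigma_plus X \<eta> = {\<sigma>. (\<forall>\<xi>\<in>ball 0 1. mink (lift \<xi>) \<sigma> \<ge> phi_plus X \<xi>)
      \<and> mink (lift \<eta>) \<sigma> = phi_plus X \<eta>}"

(* the unique point if Sigma is a point (closed_segment p p = {p}), the midpoint if a segment *)
definition sel_mid :: "(real^3) set \<Rightarrow> real^3" where
  "sel_mid S = (THE m. \<exists>p q. S = closed_segment p q \<and> m = midpoint p q)"

definition E_minus :: "(complex \<Rightarrow> complex) \<Rightarrow> complex \<Rightarrow> complex" where
  "E_minus X \<eta> = frechet_derivative Pi_proj (at (lift \<eta>))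
                    (mcross (lift \<eta>) (sel_mid (Sigma_minus X \<eta>)))"

definition E_plus :: "(complex \<Rightarrow> complex) \<Rightarrow> complex \<Rightarrow> complex" where
  "E_plus X \<eta> = frechet_derivative Pi_proj (at (lift \<eta>))
                    (mcross (lift \<eta>) (sel_mid (Sigma_plus X \<eta>)))"

definition extends_continuously :: "(complex \<Rightarrow> complex) \<Rightarrow> (complex \<Rightarrow> complex) \<Rightarrow> bool" where
  "extends_continuously Xh X \<longleftrightarrow>
     (\<forall>z\<in>sphere 0 1. \<forall>\<eta>. (\<forall>n. \<eta> n \<in> ball 0 1) \<and> \<eta> \<longlonglongrightarrow> z
        \<longrightarrow> (\<lambda>n. Xh (\<eta> n)) \<longlonglongrightarrow> X z)"

definition extends_radially :: "(complex \<Rightarrow> complex) \<Rightarrow> (complex \<Rightarrow> complex) \<Rightarrow> bool" where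
  "extends_radially Xh X \<longleftrightarrow>
     (\<forall>z\<in>sphere 0 1. \<forall>x\<in>ball 0 1.
        ((\<lambda>s::real. Xh ((1 - of_real s) * z + of_real s * x)) \<longlongrightarrow> X z) (at_right 0))"

end

theory Submission
  imports Defs
begin


lemma mcross_eq: "mcross x y = vector [x$3*y$2 - x$2*y$3, x$3*y$1 - x$1*y$3, x$1*y$2 - x$2*y$1]"
proof -
  let ?w = "vector [x$3*y$2 - x$2*y$3, x$3*y$1 - x$1*y$3, x$1*y$2 - x$2*y$1] :: real^3"
  have P: "\<forall>v. mink ?w v = det (vector [x, y, v] :: real^3^3)"
    by (auto simp: mink_def det_3 algebra_simps)
  have U: "w = ?w" if "\<forall>v. mink w v = det (vector [x, y, v] :: real^3^3)" for w
  proof -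
    have e: "mink w v = mink ?w v" for v using that P by simp
    have 1: "w$1 = ?w$1" using e[of "vector [1,0,0]"] by (simp add: mink_def)
    have 2: "w$2 = ?w$2" using e[of "vector [0,1,0]"] by (simp add: mink_def)
    have 3: "w$3 = ?w$3" using e[of "vector [0,0,1]"] by (simp add: mink_def)
    show ?thesis using 1 2 3 by (simp add: vec_eq_iff forall_3)
  qed
  show ?thesis unfolding mcross_def using P U by (rule the_equality)
qed

lemma Pi_proj_deriv:
  assumes "p$1 = 1"
  shows "(Pi_proj has_derivative (\<lambda>w. Complex (w$2 - p$2 * w$1) (w$3 - p$3 * w$1))) (at p)"
proof -
  have e: "Pi_proj = (\<lambda>x. of_real (x$2/x$1) + \<i> * of_real (x$3/x$1))"
    by (auto simp: Pi_proj_def fun_eq_iff complex_eq_iff)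
  have d: "((\<lambda>x::real^3. x$i) has_derivative (\<lambda>w. w$i)) (at p)" for i
    by (rule bounded_linear_imp_has_derivative) (rule bounded_linear_vec_nth)
  show ?thesis unfolding e
    apply (rule derivative_eq_intros d refl | simp add: assms)+
    apply (auto simp: complex_eq_iff assms algebra_simps)
    done
qed



definition minor :: "(complex \<Rightarrow> real) \<Rightarrow> real \<Rightarrow> real \<Rightarrow> real \<Rightarrow> bool" where
  "minor \<phi> c b1 b2 \<longleftrightarrow> (\<forall>z\<in>sphere 0 1. c + b1 * Re z + b2 * Im z \<le> \<phi> z)"

definition pm :: "(complex \<Rightarrow> real) \<Rightarrow> complex \<Rightarrow> real" where
  "pm \<phi> \<eta> = Sup {c + b1 * Re \<eta> + b2 * Im \<eta> | c b1 b2.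
      \<forall>z\<in>sphere 0 1. c + b1 * Re z + b2 * Im z \<le> \<phi> z}"

definition bb :: "(complex \<Rightarrow> real) \<Rightarrow> bool" where
  "bb \<phi> \<longleftrightarrow> (\<exists>m. \<forall>z\<in>sphere 0 1. m \<le> \<phi> z)"

lemma phi_minus_pm: "phi_minus X = pm (phiX X)"
  by (simp add: fun_eq_iff phi_minus_def pm_def)

lemma chord_bound:
  assumes "minor \<phi> c b1 b2" "cmod \<xi> \<le> 1"
  defines "w \<equiv> (if \<xi> = 0 then 1 else \<xi> / of_real (cmod \<xi>))"
  shows "c + b1 * Re \<xi> + b2 * Im \<xi> \<le> max (\<phi> w) (\<phi> (- w))"
proof -
  have w1: "cmod w = 1" by (auto simp: w_def norm_divide)
  have re: "Re \<xi> = cmod \<xi> * Re w" "Im \<xi> = cmod \<xi> * Im w"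
    by (auto simp: w_def)
  have a: "c + b1 * Re w + b2 * Im w \<le> \<phi> w" using assms(1) w1 by (auto simp: minor_def)
  have b: "c + b1 * Re (-w) + b2 * Im (-w) \<le> \<phi> (-w)" using assms(1) w1 unfolding minor_def
    by (metis mem_sphere_0 norm_minus_cancel)
  define L where "L = b1 * Re w + b2 * Im w"
  have "c + b1 * Re \<xi> + b2 * Im \<xi> = c + cmod \<xi> * L" by (simp add: re L_def algebra_simps)
  also have "\<dots> \<le> max (c + L) (c - L)"
  proof (cases "L \<ge> 0")
    case True
    then have "cmod \<xi> * L \<le> L" using assms(2) by (simp add: mult_left_le_one_le)
    then show ?thesis by simp
  next
    case False
    then have "cmod \<xi> * L \<le> 0" by (simp add: mult_nonneg_nonpos)
    then show ?thesis using False by simp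
  qed
  also have "\<dots> \<le> max (\<phi> w) (\<phi> (-w))" using a b by (auto simp: L_def)
  finally show ?thesis .
qed

lemma pm_bdd:
  assumes "cmod \<xi> \<le> 1"
  shows "bdd_above {c + b1 * Re \<xi> + b2 * Im \<xi> | c b1 b2. \<forall>z\<in>sphere 0 1. c + b1 * Re z + b2 * Im z \<le> \<phi> z}"
proof -
  let ?w = "(if \<xi> = 0 then 1 else \<xi> / of_real (cmod \<xi>))"
  show ?thesis unfolding bdd_above_def
    apply (rule exI[of _ "max (\<phi> ?w) (\<phi> (- ?w))"])
    using chord_bound[OF _ assms, of \<phi>] by (auto simp: minor_def)
qed

lemma pm_upper:
  assumes "minor \<phi> c b1 b2" "cmod \<xi> \<le> 1"
  shows "c + b1 * Re \<xi> + b2 * Im \<xi> \<le> pm \<phi> \<xi>"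
  unfolding pm_def
  by (rule cSup_upper[OF _ pm_bdd[OF assms(2)]]) (use assms(1) in \<open>auto simp: minor_def\<close>)

lemma pm_ne:
  assumes "bb \<phi>"
  shows "{c + b1 * Re \<xi> + b2 * Im \<xi> | c b1 b2. \<forall>z\<in>sphere 0 1. c + b1 * Re z + b2 * Im z \<le> \<phi> z} \<noteq> {}"
proof -
  obtain m where "\<forall>z\<in>sphere 0 1. m \<le> \<phi> z" using assms by (auto simp: bb_def)
  then have "m + 0 * Re \<xi> + 0 * Im \<xi> \<in> {c + b1 * Re \<xi> + b2 * Im \<xi> | c b1 b2. \<forall>z\<in>sphere 0 1. c + b1 * Re z + b2 * Im z \<le> \<phi> z}"
    by (intro CollectI exI[of _ m] exI[of _ 0]) auto
  then show ?thesis by blast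
qed

lemma pm_least:
  assumes "bb \<phi>" "\<And>c b1 b2. minor \<phi> c b1 b2 \<Longrightarrow> c + b1 * Re \<xi> + b2 * Im \<xi> \<le> B"
  shows "pm \<phi> \<xi> \<le> B"
  unfolding pm_def
  by (rule cSup_least[OF pm_ne[OF assms(1)]]) (use assms(2) in \<open>auto simp: minor_def\<close>)

lemma pm_approx:
  assumes "bb \<phi>" "cmod \<xi> \<le> 1" "e > 0"
  obtains c b1 b2 where "minor \<phi> c b1 b2" "pm \<phi> \<xi> - e < c + b1 * Re \<xi> + b2 * Im \<xi>"
proof -
  have "pm \<phi> \<xi> - e < pm \<phi> \<xi>" using assms by simp
  then have "\<exists>x\<in>{c + b1 * Re \<xi> + b2 * Im \<xi> | c b1 b2. \<forall>z\<in>sphere 0 1. c + b1 * Re z + b2 * Im z \<le> \<phi> z}. pm \<phi> \<xi> - e < x"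
    unfolding pm_def[of \<phi> \<xi>] by (subst (asm) less_cSup_iff[OF pm_ne[OF assms(1)] pm_bdd[OF assms(2)]])
  then show ?thesis using that by (auto simp: minor_def)
qed

lemma pm_le_phi:
  assumes "bb \<phi>" "z \<in> sphere 0 1"
  shows "pm \<phi> z \<le> \<phi> z"
  by (rule pm_least[OF assms(1)]) (use assms(2) in \<open>auto simp: minor_def\<close>)

lemma pm_convex:
  assumes "bb \<phi>" "cmod p \<le> 1" "cmod q \<le> 1" "0 \<le> t" "t \<le> 1"
  shows "pm \<phi> (of_real t * p + of_real (1 - t) * q) \<le> t * pm \<phi> p + (1 - t) * pm \<phi> q"
proof (rule pm_least[OF assms(1)])
  fix c b1 b2 assume m: "minor \<phi> c b1 b2"
  have e: "c + b1 * Re (of_real t * p + of_real (1 - t) * q) + b2 * Im (of_real t * p + of_real (1 - t) * q)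
     = t * (c + b1 * Re p + b2 * Im p) + (1 - t) * (c + b1 * Re q + b2 * Im q)"
    by (simp add: algebra_simps)
  have "t * (c + b1 * Re p + b2 * Im p) \<le> t * pm \<phi> p"
    using pm_upper[OF m assms(2)] assms(4) by (rule mult_left_mono)
  moreover have "(1 - t) * (c + b1 * Re q + b2 * Im q) \<le> (1 - t) * pm \<phi> q"
    using pm_upper[OF m assms(3)] assms(5) by (intro mult_left_mono) auto
  ultimately show "c + b1 * Re (of_real t * p + of_real (1 - t) * q) + b2 * Im (of_real t * p + of_real (1 - t) * q)
     \<le> t * pm \<phi> p + (1 - t) * pm \<phi> q" unfolding e by linarith
qed



definition lscat :: "(complex \<Rightarrow> real) \<Rightarrow> complex \<Rightarrow> bool" where
  "lscat \<phi> z \<longleftrightarrow> (\<forall>e>0. \<exists>\<delta>>0. \<forall>w\<in>sphere 0 1. cmod (w - z) < \<delta> \<longrightarrow> \<phi> z - e < \<phi> w)"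

lemma sphere_sq: "cmod w = 1 \<Longrightarrow> (Re w)\<^sup>2 + (Im w)\<^sup>2 = 1"
  by (metis cmod_power2 power_one)

lemma lsc_minor:
  assumes "bb \<phi>" "z \<in> sphere 0 1" "e > 0" "lscat \<phi> z"
  obtains c b1 b2 \<delta> where "minor \<phi> c b1 b2" "\<delta> > 0"
    "\<And>\<xi>. cmod (\<xi> - z) < \<delta> \<Longrightarrow> \<phi> z - e \<le> c + b1 * Re \<xi> + b2 * Im \<xi>"
proof -
  obtain \<delta>0 where d0: "\<delta>0 > 0" "\<And>w. w \<in> sphere 0 1 \<Longrightarrow> cmod (w - z) < \<delta>0 \<Longrightarrow> \<phi> z - e/2 < \<phi> w"
    using assms(3,4) unfolding lscat_def by (meson half_gt_zero)
  obtain m where m: "\<And>w. w \<in> sphere 0 1 \<Longrightarrow> m \<le> \<phi> w" using assms(1) unfolding bb_def by blast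
  define M where "M = max 0 (2 * (\<phi> z - m) / \<delta>0\<^sup>2)"
  have M0: "M \<ge> 0" by (simp add: M_def)
  have Md: "M * \<delta>0\<^sup>2 / 2 \<ge> \<phi> z - m"
  proof -
    have "M * \<delta>0\<^sup>2 \<ge> (2 * (\<phi> z - m) / \<delta>0\<^sup>2) * \<delta>0\<^sup>2"
      by (rule mult_right_mono) (auto simp: M_def)
    then show ?thesis using d0(1) by simp
  qed
  have z1: "(Re z)\<^sup>2 + (Im z)\<^sup>2 = 1" using assms(2) sphere_sq by simp
  define c where "c = \<phi> z - e/2 - M"
  have val: "c + M * Re z * Re \<xi> + M * Im z * Im \<xi> = \<phi> z - e/2 - M * (Re z * Re (z - \<xi>) + Im z * Im (z - \<xi>))" for \<xi>
    using z1 by (simp add: c_def algebra_simps power2_eq_square)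
  have cs: "Re z * Re v + Im z * Im v \<le> cmod v" for v
  proof -
    have "Re z * Re v + Im z * Im v = Re (cnj z * v)" by simp
    also have "\<dots> \<le> cmod (cnj z * v)" by (rule complex_Re_le_cmod)
    also have "\<dots> = cmod v" using assms(2) by (simp add: norm_mult)
    finally show ?thesis .
  qed
  have minor: "minor \<phi> c (M * Re z) (M * Im z)"
    unfolding minor_def
  proof
    fix w :: complex assume w: "w \<in> sphere 0 1"
    have w1: "(Re w)\<^sup>2 + (Im w)\<^sup>2 = 1" using w sphere_sq by simp
    have q: "Re z * Re (z - w) + Im z * Im (z - w) = (cmod (w - z))\<^sup>2 / 2"
    proof -
      have "(cmod (w - z))\<^sup>2 = (Re w - Re z)\<^sup>2 + (Im w - Im z)\<^sup>2" by (simp add: cmod_power2)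
      then show ?thesis using z1 w1 by (simp add: algebra_simps power2_eq_square)
    qed
    have v: "c + M * Re z * Re w + M * Im z * Im w = \<phi> z - e/2 - M * ((cmod (w - z))\<^sup>2 / 2)"
      using val[of w] q by simp
    show "c + M * Re z * Re w + M * Im z * Im w \<le> \<phi> w"
    proof (cases "cmod (w - z) < \<delta>0")
      case True
      then have "\<phi> z - e/2 < \<phi> w" using d0(2) w by blast
      moreover have "M * ((cmod (w - z))\<^sup>2 / 2) \<ge> 0" using M0 by simp
      ultimately show ?thesis using v by linarith
    next
      case False
      then have "\<delta>0\<^sup>2 \<le> (cmod (w - z))\<^sup>2" using d0(1) by (simp add: power_mono)
      then have "M * \<delta>0\<^sup>2 / 2 \<le> M * ((cmod (w - z))\<^sup>2 / 2)" using M0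
        by (simp add: mult_left_mono)
      then show ?thesis using v Md m[OF w] assms(3) by linarith
    qed
  qed
  define \<delta> where "\<delta> = e / (2 * (M + 1))"
  have dpos: "\<delta> > 0" using assms(3) M0 by (simp add: \<delta>_def)
  show ?thesis
  proof (rule that[OF minor dpos])
    fix \<xi> assume a: "cmod (\<xi> - z) < \<delta>"
    have "M * (Re z * Re (z - \<xi>) + Im z * Im (z - \<xi>)) \<le> M * cmod (z - \<xi>)"
      using cs[of "z - \<xi>"] M0 by (intro mult_left_mono) auto
    also have "\<dots> \<le> M * \<delta>" using a M0 by (simp add: norm_minus_commute mult_left_mono)
    also have "\<dots> \<le> e/2"
    proof -
      have "M * \<delta> = (e * M) / (2 * (M + 1))" by (simp add: \<delta>_def)
      also have "\<dots> \<le> e/2" using M0 assms(3) by (simp add: divide_le_eq algebra_simps)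
      finally show ?thesis .
    qed
    finally show "\<phi> z - e \<le> c + M * Re z * Re \<xi> + M * Im z * Im \<xi>" using val[of \<xi>] by linarith
  qed
qed

lemma pm_lower:
  assumes "bb \<phi>" "z \<in> sphere 0 1" "e > 0" "lscat \<phi> z"
  obtains \<delta> where "\<delta> > 0" "\<And>\<xi>. cmod \<xi> \<le> 1 \<Longrightarrow> cmod (\<xi> - z) < \<delta> \<Longrightarrow> \<phi> z - e \<le> pm \<phi> \<xi>"
proof -
  obtain c b1 b2 \<delta> where m: "minor \<phi> c b1 b2" "\<delta> > 0"
    "\<And>\<xi>. cmod (\<xi> - z) < \<delta> \<Longrightarrow> \<phi> z - e \<le> c + b1 * Re \<xi> + b2 * Im \<xi>"
    using lsc_minor[OF assms] by blast
  show ?thesis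
    by (rule that[OF m(2)]) (meson m(1) m(3) order_trans pm_upper)
qed

lemma pm_upper_near:
  assumes "bb \<phi>" "bb (\<lambda>w. - \<phi> w)" "z \<in> sphere 0 1" "e > 0" "lscat (\<lambda>w. - \<phi> w) z"
  obtains \<delta> where "\<delta> > 0" "\<And>\<xi>. cmod \<xi> \<le> 1 \<Longrightarrow> cmod (\<xi> - z) < \<delta> \<Longrightarrow> pm \<phi> \<xi> \<le> \<phi> z + e"
proof -
  obtain c' b1' b2' \<delta> where m: "minor (\<lambda>w. - \<phi> w) c' b1' b2'" "\<delta> > 0"
    "\<And>\<xi>. cmod (\<xi> - z) < \<delta> \<Longrightarrow> - \<phi> z - e \<le> c' + b1' * Re \<xi> + b2' * Im \<xi>"
    using lsc_minor[OF assms(2,3,4,5)] by blast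
  show ?thesis
  proof (rule that[OF m(2)])
    fix \<xi> assume x: "cmod \<xi> \<le> 1" "cmod (\<xi> - z) < \<delta>"
    show "pm \<phi> \<xi> \<le> \<phi> z + e"
    proof (rule pm_least[OF assms(1)])
      fix c b1 b2 assume mm: "minor \<phi> c b1 b2"
      have "minor (\<lambda>_. 0) (c + c') (b1 + b1') (b2 + b2')"
        using mm m(1) unfolding minor_def by (smt (verit) distrib_right)
      from chord_bound[OF this x(1)]
      have "c + c' + (b1 + b1') * Re \<xi> + (b2 + b2') * Im \<xi> \<le> 0" by simp
      then show "c + b1 * Re \<xi> + b2 * Im \<xi> \<le> \<phi> z + e" using m(3)[OF x(2)] by (simp add: algebra_simps)
    qed
  qed
qed



definition Sg :: "(complex \<Rightarrow> real) \<Rightarrow> complex \<Rightarrow> (real^3) set" where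
  "Sg \<phi> \<eta> = {\<sigma>. (\<forall>\<xi>\<in>ball 0 1. mink (lift \<xi>) \<sigma> \<le> pm \<phi> \<xi>) \<and> mink (lift \<eta>) \<sigma> = pm \<phi> \<eta>}"

lemma Sigma_minus_Sg: "Sigma_minus X = Sg (phiX X)"
  by (simp add: fun_eq_iff Sigma_minus_def Sg_def phi_minus_pm)

lemma mink_lift: "mink (lift \<xi>) \<sigma> = - \<sigma>$1 + \<sigma>$2 * Re \<xi> + \<sigma>$3 * Im \<xi>"
  by (simp add: mink_def lift_def)

lemma Sg_char:
  assumes "bb \<phi>" "\<eta> \<in> ball 0 1"
  shows "Sg \<phi> \<eta> = {\<sigma>. minor \<phi> (- \<sigma>$1) (\<sigma>$2) (\<sigma>$3) \<and> - \<sigma>$1 + \<sigma>$2 * Re \<eta> + \<sigma>$3 * Im \<eta> = pm \<phi> \<eta>}"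
proof (intro set_eqI iffI)
  fix \<sigma> :: "real^3" assume "\<sigma> \<in> {\<sigma>. minor \<phi> (- \<sigma>$1) (\<sigma>$2) (\<sigma>$3) \<and> - \<sigma>$1 + \<sigma>$2 * Re \<eta> + \<sigma>$3 * Im \<eta> = pm \<phi> \<eta>}"
  then show "\<sigma> \<in> Sg \<phi> \<eta>"
    using pm_upper[of \<phi> "- \<sigma>$1" "\<sigma>$2" "\<sigma>$3"]
    by (auto simp: Sg_def mink_lift mult.commute)
next
  fix \<sigma> :: "real^3" assume s: "\<sigma> \<in> Sg \<phi> \<eta>"
  let ?l = "\<lambda>\<xi>. - \<sigma>$1 + \<sigma>$2 * Re \<xi> + \<sigma>$3 * Im \<xi>"
  have le: "?l \<xi> \<le> pm \<phi> \<xi>" if "\<xi> \<in> ball 0 1" for \<xi>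
    using s that by (auto simp: Sg_def mink_lift)
  have "?l z \<le> \<phi> z" if z: "z \<in> sphere 0 1" for z
  proof (rule ccontr)
    assume "\<not> ?thesis"
    define e where "e = ?l z - \<phi> z"
    have e: "e > 0" using \<open>\<not> ?l z \<le> \<phi> z\<close> by (simp add: e_def)
    define K where "K = pm \<phi> 0 - ?l 0"
    have K: "K \<ge> 0" using le[of 0] by (simp add: K_def)
    define s where "s = e / (2 * (e + K))"
    have s0: "s > 0" using e K by (simp add: s_def)
    have s1: "s \<le> 1/2" using e K by (simp add: s_def divide_le_eq)
    define \<xi> where "\<xi> = of_real (1 - s) * z + of_real (1 - (1 - s)) * 0"
    have xn: "cmod \<xi> = 1 - s"
    proof -
      have "\<xi> = of_real (1 - s) * z" by (simp add: \<xi>_def)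
      then have "cmod \<xi> = \<bar>1 - s\<bar> * cmod z" by (simp only: norm_mult norm_of_real)
      then show ?thesis using z s1 by simp
    qed
    have xb: "\<xi> \<in> ball 0 1" using xn s0 by simp
    have lx: "?l \<xi> = (1 - s) * ?l z + s * ?l 0" by (simp add: \<xi>_def algebra_simps)
    have "pm \<phi> \<xi> \<le> (1 - s) * pm \<phi> z + (1 - (1 - s)) * pm \<phi> 0"
      unfolding \<xi>_def using z s0 s1 by (intro pm_convex[OF assms(1)]) auto
    moreover have "(1 - s) * pm \<phi> z \<le> (1 - s) * \<phi> z"
      using pm_le_phi[OF assms(1) z] s1 by (intro mult_left_mono) auto
    ultimately have "(1 - s) * ?l z + s * ?l 0 \<le> (1 - s) * \<phi> z + s * pm \<phi> 0"
      using le[OF xb] lx by simp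
    then have i1: "(1 - s) * e \<le> s * K" by (simp add: e_def K_def algebra_simps)
    have "(1 - s) * e \<ge> e / 2"
    proof -
      have "(1/2) * e \<le> (1 - s) * e" using s1 e by (intro mult_right_mono) auto
      then show ?thesis by simp
    qed
    moreover have "s * K < e / 2"
    proof -
      have "s * K = (e * K) / (2 * (e + K))" by (simp add: s_def)
      also have "\<dots> < e / 2" using e K by (simp add: divide_less_eq algebra_simps)
      finally show ?thesis .
    qed
    ultimately show False using i1 by linarith
  qed
  then have "minor \<phi> (- \<sigma>$1) (\<sigma>$2) (\<sigma>$3)" by (auto simp: minor_def mult.commute)
  then show "\<sigma> \<in> {\<sigma>. minor \<phi> (- \<sigma>$1) (\<sigma>$2) (\<sigma>$3) \<and> - \<sigma>$1 + \<sigma>$2 * Re \<eta> + \<sigma>$3 * Im \<eta> = pm \<phi> \<eta>}"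
    using s by (auto simp: Sg_def mink_lift)
qed

lemma grad_bound:
  fixes \<sigma> :: "real^3"
  assumes "- \<sigma>$1 + \<sigma>$2 * Re (\<eta> + of_real \<rho>) + \<sigma>$3 * Im (\<eta> + of_real \<rho>) \<le> U"
    "- \<sigma>$1 + \<sigma>$2 * Re (\<eta> - of_real \<rho>) + \<sigma>$3 * Im (\<eta> - of_real \<rho>) \<le> U"
    "- \<sigma>$1 + \<sigma>$2 * Re (\<eta> + \<i> * of_real \<rho>) + \<sigma>$3 * Im (\<eta> + \<i> * of_real \<rho>) \<le> U"
    "- \<sigma>$1 + \<sigma>$2 * Re (\<eta> - \<i> * of_real \<rho>) + \<sigma>$3 * Im (\<eta> - \<i> * of_real \<rho>) \<le> U"
  shows "\<rho> * \<bar>\<sigma>$2\<bar> \<le> U - (- \<sigma>$1 + \<sigma>$2 * Re \<eta> + \<sigma>$3 * Im \<eta>)"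
    and "\<rho> * \<bar>\<sigma>$3\<bar> \<le> U - (- \<sigma>$1 + \<sigma>$2 * Re \<eta> + \<sigma>$3 * Im \<eta>)"
  using assms by (auto simp: abs_if algebra_simps)

lemma pts_in_ball:
  assumes "cmod \<eta> + \<rho> < 1" "\<rho> \<ge> 0"
  shows "\<eta> + of_real \<rho> \<in> ball 0 1" "\<eta> - of_real \<rho> \<in> ball 0 1"
    "\<eta> + \<i> * of_real \<rho> \<in> ball 0 1" "\<eta> - \<i> * of_real \<rho> \<in> ball 0 1"
proof -
  have "cmod (\<eta> + of_real \<rho>) \<le> cmod \<eta> + \<rho>" using norm_triangle_ineq[of \<eta> "of_real \<rho>"] assms(2) by simp
  then show "\<eta> + of_real \<rho> \<in> ball 0 1" using assms by simp
  have "cmod (\<eta> - of_real \<rho>) \<le> cmod \<eta> + \<rho>" using norm_triangle_ineq4[of \<eta> "of_real \<rho>"] assms(2) by simp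
  then show "\<eta> - of_real \<rho> \<in> ball 0 1" using assms by simp
  have "cmod (\<eta> + \<i> * of_real \<rho>) \<le> cmod \<eta> + \<rho>" using norm_triangle_ineq[of \<eta> "\<i> * of_real \<rho>"] assms(2) by (simp add: norm_mult)
  then show "\<eta> + \<i> * of_real \<rho> \<in> ball 0 1" using assms by simp
  have "cmod (\<eta> - \<i> * of_real \<rho>) \<le> cmod \<eta> + \<rho>" using norm_triangle_ineq4[of \<eta> "\<i> * of_real \<rho>"] assms(2) by (simp add: norm_mult)
  then show "\<eta> - \<i> * of_real \<rho> \<in> ball 0 1" using assms by simp
qed



definition ell :: "real^3 \<Rightarrow> complex \<Rightarrow> real" where
  "ell \<sigma> \<xi> = - \<sigma>$1 + \<sigma>$2 * Re \<xi> + \<sigma>$3 * Im \<xi>"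

lemma abs_lin_bound:
  fixes A B a b N :: real
  assumes "\<bar>A\<bar> \<le> N" "\<bar>B\<bar> \<le> N"
  shows "\<bar>A * a - B * b\<bar> \<le> N * (\<bar>a\<bar> + \<bar>b\<bar>)"
proof -
  have "\<bar>A * a - B * b\<bar> \<le> \<bar>A\<bar> * \<bar>a\<bar> + \<bar>B\<bar> * \<bar>b\<bar>"
    by (metis abs_mult abs_triangle_ineq4)
  also have "\<dots> \<le> N * \<bar>a\<bar> + N * \<bar>b\<bar>"
    using assms by (intro add_mono mult_right_mono) auto
  finally show ?thesis by (simp add: algebra_simps)
qed

lemma max3_bound:
  fixes l \<alpha> \<beta> :: real
  shows "max l (max (l + \<alpha>) (l + \<beta>)) \<ge> l + (\<alpha> + \<beta>)/3 + (\<bar>\<alpha>\<bar> + \<bar>\<beta>\<bar>)/6"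
proof -
  let ?X = "l + (\<alpha> + \<beta>)/3 + (\<bar>\<alpha>\<bar> + \<bar>\<beta>\<bar>)/6"
  have "?X \<le> l \<or> ?X \<le> l + \<alpha> \<or> ?X \<le> l + \<beta>"
  proof (cases "\<alpha> \<ge> 0"; cases "\<beta> \<ge> 0")
    assume "\<alpha> \<ge> 0" "\<beta> \<ge> 0"
    then show ?thesis
    proof (cases "\<alpha> \<ge> \<beta>")
      case True
      then have "?X \<le> l + \<alpha>" using \<open>\<alpha> \<ge> 0\<close> \<open>\<beta> \<ge> 0\<close> by (simp add: field_simps)
      then show ?thesis by blast
    next
      case False
      then have "?X \<le> l + \<beta>" using \<open>\<alpha> \<ge> 0\<close> \<open>\<beta> \<ge> 0\<close> by (simp add: field_simps)
      then show ?thesis by blast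
    qed
  next
    assume "\<alpha> \<ge> 0" "\<not> \<beta> \<ge> 0"
    then have "?X \<le> l + \<alpha>" by (simp add: field_simps)
    then show ?thesis by blast
  next
    assume "\<not> \<alpha> \<ge> 0" "\<beta> \<ge> 0"
    then have "?X \<le> l + \<beta>" by (simp add: field_simps)
    then show ?thesis by blast
  next
    assume "\<not> \<alpha> \<ge> 0" "\<not> \<beta> \<ge> 0"
    then have "?X \<le> l" by (simp add: field_simps)
    then show ?thesis by blast
  qed
  then show ?thesis by (auto simp: le_max_iff_disj)
qed

lemma noncol_contra:
  assumes bb: "bb \<phi>" and eta: "\<eta> \<in> ball 0 1"
    and ma: "minor \<phi> (- a$1) (a$2) (a$3)" and ea: "ell a \<eta> = pm \<phi> \<eta>"
    and mb: "minor \<phi> (- b$1) (b$2) (b$3)" and eb: "ell b \<eta> = pm \<phi> \<eta>"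
    and mx: "minor \<phi> (- x$1) (x$2) (x$3)" and ex: "ell x \<eta> = pm \<phi> \<eta>"
    and k: "(b$2 - a$2) * (x$3 - a$3) - (b$3 - a$3) * (x$2 - a$2) \<noteq> 0"
  shows False
proof -
  define p1 where "p1 = b$2 - a$2"
  define q1 where "q1 = b$3 - a$3"
  define px where "px = x$2 - a$2"
  define qx where "qx = x$3 - a$3"
  define \<kappa> where "\<kappa> = p1 * qx - q1 * px"
  have k0: "\<kappa> \<noteq> 0" using k by (simp add: \<kappa>_def p1_def q1_def px_def qx_def)
  define N where "N = \<bar>p1\<bar> + \<bar>q1\<bar> + \<bar>px\<bar> + \<bar>qx\<bar>"
  have N0: "N > 0"
  proof (rule ccontr)
    assume "\<not> N > 0"
    then have "p1 = 0" "q1 = 0" unfolding N_def by auto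
    then show False using k0 by (simp add: \<kappa>_def)
  qed
  have en: "cmod \<eta> < 1" using eta by simp
  define \<delta> where "\<delta> = \<bar>\<kappa>\<bar> * (1 - cmod \<eta>) / (12 * N)"
  have d0: "\<delta> > 0" using k0 N0 en by (simp add: \<delta>_def)
  define c where "c = (- a$1 - b$1 - x$1) / 3 + \<delta>"
  define b1 where "b1 = (a$2 + b$2 + x$2) / 3"
  define b2 where "b2 = (a$3 + b$3 + x$3) / 3"
  define P where "P = pm \<phi> \<eta>"
  have vals: "c + b1 * Re w + b2 * Im w = (ell a w + ell b w + ell x w) / 3 + \<delta>" for w
    by (simp add: c_def b1_def b2_def ell_def field_simps)
  have "minor \<phi> c b1 b2"
    unfolding minor_def
  proof
    fix w :: complex assume w: "w \<in> sphere 0 1"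
    define v1 where "v1 = Re w - Re \<eta>"
    define v2 where "v2 = Im w - Im \<eta>"
    define \<alpha> where "\<alpha> = p1 * v1 + q1 * v2"
    define \<beta> where "\<beta> = px * v1 + qx * v2"
    have lb: "ell b w = ell a w + \<alpha>"
      using ea eb by (simp add: ell_def \<alpha>_def p1_def q1_def v1_def v2_def algebra_simps)
    have lx: "ell x w = ell a w + \<beta>"
      using ea ex by (simp add: ell_def \<beta>_def px_def qx_def v1_def v2_def algebra_simps)
    have i1: "\<kappa> * v1 = qx * \<alpha> - q1 * \<beta>" by (simp add: \<kappa>_def \<alpha>_def \<beta>_def algebra_simps)
    have i2: "\<kappa> * v2 = p1 * \<beta> - px * \<alpha>" by (simp add: \<kappa>_def \<alpha>_def \<beta>_def algebra_simps)
    have b1': "\<bar>\<kappa>\<bar> * \<bar>v1\<bar> \<le> N * (\<bar>\<alpha>\<bar> + \<bar>\<beta>\<bar>)"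
      using abs_lin_bound[of qx N q1 \<alpha> \<beta>] i1 by (simp add: N_def) (metis abs_mult)
    have b2': "\<bar>\<kappa>\<bar> * \<bar>v2\<bar> \<le> N * (\<bar>\<alpha>\<bar> + \<bar>\<beta>\<bar>)"
      using abs_lin_bound[of p1 N px \<beta> \<alpha>] i2 by (simp add: N_def add.commute) (metis abs_mult)
    have "cmod (w - \<eta>) \<le> \<bar>v1\<bar> + \<bar>v2\<bar>" using cmod_le[of "w - \<eta>"] by (simp add: v1_def v2_def)
    moreover have "1 - cmod \<eta> \<le> cmod (w - \<eta>)"
      using w norm_triangle_ineq2[of w \<eta>] by simp
    ultimately have "1 - cmod \<eta> \<le> \<bar>v1\<bar> + \<bar>v2\<bar>" by linarith
    then have "\<bar>\<kappa>\<bar> * (1 - cmod \<eta>) \<le> \<bar>\<kappa>\<bar> * (\<bar>v1\<bar> + \<bar>v2\<bar>)" by (simp add: mult_left_mono)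
    also have "\<dots> \<le> 2 * N * (\<bar>\<alpha>\<bar> + \<bar>\<beta>\<bar>)" using b1' b2' by (simp add: algebra_simps)
    finally have "\<delta> * (12 * N) \<le> 2 * N * (\<bar>\<alpha>\<bar> + \<bar>\<beta>\<bar>)" using N0 by (simp add: \<delta>_def)
    then have "N * (\<delta> * 12) \<le> N * (2 * (\<bar>\<alpha>\<bar> + \<bar>\<beta>\<bar>))" by (simp add: algebra_simps)
    then have "\<delta> * 12 \<le> 2 * (\<bar>\<alpha>\<bar> + \<bar>\<beta>\<bar>)" using N0 by (simp add: mult_le_cancel_left_pos)
    then have dle: "\<delta> \<le> (\<bar>\<alpha>\<bar> + \<bar>\<beta>\<bar>) / 6" by simp
    have wa: "ell a w \<le> \<phi> w" using ma w by (simp add: minor_def ell_def)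
    have wb: "ell b w \<le> \<phi> w" using mb w by (simp add: minor_def ell_def)
    have wx: "ell x w \<le> \<phi> w" using mx w by (simp add: minor_def ell_def)
    have "c + b1 * Re w + b2 * Im w = ell a w + (\<alpha> + \<beta>)/3 + \<delta>" using vals[of w] lb lx by simp
    also have "\<dots> \<le> max (ell a w) (max (ell a w + \<alpha>) (ell a w + \<beta>))"
      using max3_bound[of "ell a w" \<alpha> \<beta>] dle by linarith
    also have "\<dots> \<le> \<phi> w" using wa wb wx lb lx by simp
    finally show "c + b1 * Re w + b2 * Im w \<le> \<phi> w" .
  qed
  from pm_upper[OF this, of \<eta>] eta have "c + b1 * Re \<eta> + b2 * Im \<eta> \<le> P" by (simp add: P_def)
  moreover have "c + b1 * Re \<eta> + b2 * Im \<eta> = P + \<delta>" using vals[of \<eta>] ea eb ex by (simp add: P_def)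
  ultimately show False using d0 by simp
qed



lemma cont_ell: "continuous_on UNIV (\<lambda>\<sigma>::real^3. - \<sigma>$1 + \<sigma>$2 * a + \<sigma>$3 * b)"
  by (intro continuous_intros)

lemma Sg_char2:
  assumes "bb \<phi>" "\<eta> \<in> ball 0 1"
  shows "Sg \<phi> \<eta> = {\<sigma>. minor \<phi> (- \<sigma>$1) (\<sigma>$2) (\<sigma>$3) \<and> ell \<sigma> \<eta> = pm \<phi> \<eta>}"
  using Sg_char[OF assms] by (simp add: ell_def)

lemma Sg_collinear:
  assumes bb: "bb \<phi>" and eta: "\<eta> \<in> ball 0 1" and ne: "Sg \<phi> \<eta> \<noteq> {}"
  shows "collinear (Sg \<phi> \<eta>)"
proof (cases "\<exists>s0 s1. s0 \<in> Sg \<phi> \<eta> \<and> s1 \<in> Sg \<phi> \<eta> \<and> s0 \<noteq> s1")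
  case False
  obtain s0 where s0: "s0 \<in> Sg \<phi> \<eta>" using ne by blast
  then have "Sg \<phi> \<eta> \<subseteq> {s0}" using False by blast
  then show ?thesis using collinear_subset collinear_sing by blast
next
  case True
  then obtain a b where ab: "a \<in> Sg \<phi> \<eta>" "b \<in> Sg \<phi> \<eta>" "a \<noteq> b" by blast
  note ch = Sg_char2[OF bb eta]
  have ma: "minor \<phi> (- a$1) (a$2) (a$3)" "ell a \<eta> = pm \<phi> \<eta>" using ab(1) ch by auto
  have mb: "minor \<phi> (- b$1) (b$2) (b$3)" "ell b \<eta> = pm \<phi> \<eta>" using ab(2) ch by auto
  define p1 where "p1 = b$2 - a$2"
  define q1 where "q1 = b$3 - a$3"
  have pq: "p1 \<noteq> 0 \<or> q1 \<noteq> 0"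
  proof (rule ccontr)
    assume "\<not> ?thesis"
    then have "b$2 = a$2" "b$3 = a$3" by (auto simp: p1_def q1_def)
    moreover then have "b$1 = a$1" using ma(2) mb(2) by (simp add: ell_def)
    ultimately have "a = b" by (simp add: vec_eq_iff forall_3)
    then show False using ab(3) by simp
  qed
  have D: "p1\<^sup>2 + q1\<^sup>2 \<noteq> 0" using pq by (simp add: sum_power2_eq_zero_iff)
  show ?thesis unfolding collinear_alt
  proof (rule exI[of _ a], rule exI[of _ "b - a"], rule ballI)
    fix x assume x: "x \<in> Sg \<phi> \<eta>"
    have mx: "minor \<phi> (- x$1) (x$2) (x$3)" "ell x \<eta> = pm \<phi> \<eta>" using x ch by auto
    define px where "px = x$2 - a$2"
    define qx where "qx = x$3 - a$3"
    have k: "p1 * qx = q1 * px"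
    proof (rule ccontr)
      assume "p1 * qx \<noteq> q1 * px"
      then have "(b$2 - a$2) * (x$3 - a$3) - (b$3 - a$3) * (x$2 - a$2) \<noteq> 0"
        by (simp add: p1_def q1_def px_def qx_def)
      then show False using noncol_contra[OF bb eta ma mb mx] by blast
    qed
    define c where "c = (p1 * px + q1 * qx) / (p1\<^sup>2 + q1\<^sup>2)"
    have c2: "c * p1 = px"
    proof -
      have "(p1 * px + q1 * qx) * p1 = px * (p1\<^sup>2 + q1\<^sup>2)"
        using k by (simp add: power2_eq_square algebra_simps)
      then show ?thesis using D by (simp add: c_def field_simps)
    qed
    have c3: "c * q1 = qx"
    proof -
      have "(p1 * px + q1 * qx) * q1 = qx * (p1\<^sup>2 + q1\<^sup>2)"
        using k by (simp add: power2_eq_square algebra_simps)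
      then show ?thesis using D by (simp add: c_def field_simps)
    qed
    have e1: "x$1 = a$1 + c * (b$1 - a$1)"
    proof -
      have "x$1 - a$1 = px * Re \<eta> + qx * Im \<eta>" using mx(2) ma(2)
        by (simp add: ell_def px_def qx_def algebra_simps)
      moreover have "b$1 - a$1 = p1 * Re \<eta> + q1 * Im \<eta>" using mb(2) ma(2)
        by (simp add: ell_def p1_def q1_def algebra_simps)
      ultimately show ?thesis by (simp add: algebra_simps flip: c2 c3)
    qed
    have e2: "x$2 = a$2 + c * (b$2 - a$2)" using c2 unfolding p1_def px_def by linarith
    have e3: "x$3 = a$3 + c * (b$3 - a$3)" using c3 unfolding q1_def qx_def by linarith
    have "x = a + c *\<^sub>R (b - a)"
      unfolding vec_eq_iff forall_3 using e1 e2 e3 by simp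
    then show "\<exists>c. x = a + c *\<^sub>R (b - a)" by blast
  qed
qed



lemma minor_bound:
  assumes bb: "bb \<phi>" and eta: "\<eta> \<in> ball 0 1"
  obtains \<rho> U where "\<rho> > 0" "\<And>\<sigma>. minor \<phi> (- \<sigma>$1) (\<sigma>$2) (\<sigma>$3) \<Longrightarrow>
      \<rho> * \<bar>\<sigma>$2\<bar> \<le> U - ell \<sigma> \<eta> \<and> \<rho> * \<bar>\<sigma>$3\<bar> \<le> U - ell \<sigma> \<eta>"
proof -
  define \<rho> where "\<rho> = (1 - cmod \<eta>) / 2"
  have r0: "\<rho> > 0" using eta by (simp add: \<rho>_def)
  have r1: "cmod \<eta> + \<rho> < 1" using eta by (simp add: \<rho>_def field_simps)
  note P = pts_in_ball[OF r1 less_imp_le[OF r0]]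
  define Pts where "Pts = {\<eta> + of_real \<rho>, \<eta> - of_real \<rho>, \<eta> + \<i> * of_real \<rho>, \<eta> - \<i> * of_real \<rho>}"
  define U where "U = Max (pm \<phi> ` Pts)"
  have U: "pm \<phi> p \<le> U" if "p \<in> Pts" for p
    unfolding U_def by (rule Max_ge) (use that in \<open>auto simp: Pts_def\<close>)
  show ?thesis
  proof (rule that[OF r0])
    fix \<sigma> :: "real^3" assume m: "minor \<phi> (- \<sigma>$1) (\<sigma>$2) (\<sigma>$3)"
    have le: "- \<sigma>$1 + \<sigma>$2 * Re p + \<sigma>$3 * Im p \<le> U" if "p \<in> Pts" for p
    proof -
      have "p \<in> ball 0 1" using that P by (auto simp: Pts_def)
      then have "- \<sigma>$1 + \<sigma>$2 * Re p + \<sigma>$3 * Im p \<le> pm \<phi> p" using pm_upper[OF m] by simp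
      then show ?thesis using U[OF that] by linarith
    qed
    have "\<rho> * \<bar>\<sigma>$2\<bar> \<le> U - (- \<sigma>$1 + \<sigma>$2 * Re \<eta> + \<sigma>$3 * Im \<eta>)"
         "\<rho> * \<bar>\<sigma>$3\<bar> \<le> U - (- \<sigma>$1 + \<sigma>$2 * Re \<eta> + \<sigma>$3 * Im \<eta>)"
      by (rule grad_bound; rule le; simp add: Pts_def)+
    then show "\<rho> * \<bar>\<sigma>$2\<bar> \<le> U - ell \<sigma> \<eta> \<and> \<rho> * \<bar>\<sigma>$3\<bar> \<le> U - ell \<sigma> \<eta>"
      by (simp add: ell_def)
  qed
qed

lemma sigma_norm_bound:
  fixes \<sigma> :: "real^3"
  assumes "\<bar>\<sigma>$2\<bar> \<le> B" "\<bar>\<sigma>$3\<bar> \<le> B" "\<bar>ell \<sigma> \<eta>\<bar> \<le> L" "cmod \<eta> \<le> 1"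
  shows "norm \<sigma> \<le> 4 * B + L"
proof -
  have r: "\<bar>Re \<eta>\<bar> \<le> 1" "\<bar>Im \<eta>\<bar> \<le> 1" using assms(4) abs_Re_le_cmod abs_Im_le_cmod by (metis order_trans)+
  have a2: "\<bar>\<sigma>$2 * Re \<eta>\<bar> \<le> B" using r(1) assms(1) by (simp add: abs_mult) (metis abs_ge_zero mult_left_le_one_le order_trans mult.commute)
  have a3: "\<bar>\<sigma>$3 * Im \<eta>\<bar> \<le> B" using r(2) assms(2) by (simp add: abs_mult) (metis abs_ge_zero mult_left_le_one_le order_trans mult.commute)
  have "\<sigma>$1 = \<sigma>$2 * Re \<eta> + \<sigma>$3 * Im \<eta> - ell \<sigma> \<eta>" by (simp add: ell_def)
  then have a1: "\<bar>\<sigma>$1\<bar> \<le> 2 * B + L" using a2 a3 assms(3) by linarith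
  have "norm \<sigma> \<le> \<bar>\<sigma>$1\<bar> + \<bar>\<sigma>$2\<bar> + \<bar>\<sigma>$3\<bar>" using norm_le_l1_cart[of \<sigma>] by (simp add: sum_3)
  then show ?thesis using a1 assms(1,2) by linarith
qed

lemma Sg_segment:
  assumes bb: "bb \<phi>" and eta: "\<eta> \<in> ball 0 1"
  shows "\<exists>p q. Sg \<phi> \<eta> = closed_segment p q"
proof -
  obtain \<rho> U where r0: "\<rho> > 0" and UB: "\<And>\<sigma>. minor \<phi> (- \<sigma>$1) (\<sigma>$2) (\<sigma>$3) \<Longrightarrow>
      \<rho> * \<bar>\<sigma>$2\<bar> \<le> U - ell \<sigma> \<eta> \<and> \<rho> * \<bar>\<sigma>$3\<bar> \<le> U - ell \<sigma> \<eta>"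
    using minor_bound[OF bb eta] by blast
  have en: "cmod \<eta> \<le> 1" using eta by simp
  define P where "P = pm \<phi> \<eta>"
  have upper: "ell \<sigma> \<eta> \<le> P" if "minor \<phi> (- \<sigma>$1) (\<sigma>$2) (\<sigma>$3)" for \<sigma>
    using pm_upper[OF that en] by (simp add: ell_def P_def)
  define A where "A = {\<sigma>. minor \<phi> (- \<sigma>$1) (\<sigma>$2) (\<sigma>$3) \<and> P - 1 \<le> ell \<sigma> \<eta>}"
  define W where "W = (U - P + 1) / \<rho>"
  have bA: "norm \<sigma> \<le> 4 * W + (\<bar>P\<bar> + 1)" if "\<sigma> \<in> A" for \<sigma>
  proof (rule sigma_norm_bound[OF _ _ _ en])
    have m: "minor \<phi> (- \<sigma>$1) (\<sigma>$2) (\<sigma>$3)" and l: "P - 1 \<le> ell \<sigma> \<eta>" using that by (auto simp: A_def)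
    have u: "ell \<sigma> \<eta> \<le> P" using upper[OF m] .
    have "\<rho> * \<bar>\<sigma>$2\<bar> \<le> U - P + 1" "\<rho> * \<bar>\<sigma>$3\<bar> \<le> U - P + 1" using UB[OF m] l by linarith+
    then show "\<bar>\<sigma>$2\<bar> \<le> W" "\<bar>\<sigma>$3\<bar> \<le> W" using r0 by (simp_all add: W_def field_simps)
    show "\<bar>ell \<sigma> \<eta>\<bar> \<le> \<bar>P\<bar> + 1" using u l by linarith
  qed
  have cl_minor: "closed {\<sigma>::real^3. minor \<phi> (- \<sigma>$1) (\<sigma>$2) (\<sigma>$3)}"
  proof -
    have "{\<sigma>::real^3. minor \<phi> (- \<sigma>$1) (\<sigma>$2) (\<sigma>$3)} =
        (\<Inter>z\<in>sphere 0 1. {\<sigma>. - \<sigma>$1 + \<sigma>$2 * Re z + \<sigma>$3 * Im z \<le> \<phi> z})"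
      by (auto simp: minor_def)
    also have "closed \<dots>"
      by (intro closed_INT ballI closed_Collect_le cont_ell continuous_on_const)
    finally show ?thesis .
  qed
  have cl_ell: "closed {\<sigma>::real^3. P - 1 \<le> ell \<sigma> \<eta>}" "closed {\<sigma>::real^3. ell \<sigma> \<eta> = P}"
    unfolding ell_def by (intro closed_Collect_le closed_Collect_eq cont_ell continuous_on_const)+
  have "A = {\<sigma>::real^3. minor \<phi> (- \<sigma>$1) (\<sigma>$2) (\<sigma>$3)} \<inter> {\<sigma>::real^3. P - 1 \<le> ell \<sigma> \<eta>}"
    by (auto simp: A_def)
  then have clA: "closed A" using cl_minor cl_ell by (simp add: closed_Int)
  have cA: "compact A" unfolding compact_eq_bounded_closed
    using clA bA by (auto simp: bounded_iff)
  obtain c b1 b2 where cb: "minor \<phi> c b1 b2" "pm \<phi> \<eta> - 1 < c + b1 * Re \<eta> + b2 * Im \<eta>"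
    using pm_approx[OF bb en, of 1] by auto
  have "vector [-c, b1, b2] \<in> A" using cb by (simp add: A_def ell_def P_def)
  then have neA: "A \<noteq> {}" by blast
  have "continuous_on A (\<lambda>\<sigma>. ell \<sigma> \<eta>)"
    unfolding ell_def by (rule continuous_on_subset[OF cont_ell]) simp
  then obtain s where s: "s \<in> A" "\<And>t. t \<in> A \<Longrightarrow> ell t \<eta> \<le> ell s \<eta>"
    using continuous_attains_sup[OF cA neA] by blast
  have ms: "minor \<phi> (- s$1) (s$2) (s$3)" using s(1) by (simp add: A_def)
  have "P \<le> ell s \<eta>"
    unfolding P_def
  proof (rule pm_least[OF bb])
    fix c b1 b2 assume m: "minor \<phi> c b1 b2"
    show "c + b1 * Re \<eta> + b2 * Im \<eta> \<le> ell s \<eta>"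
    proof (cases "P - 1 \<le> c + b1 * Re \<eta> + b2 * Im \<eta>")
      case True
      then have "vector [-c, b1, b2] \<in> A" using m by (simp add: A_def ell_def)
      from s(2)[OF this] show ?thesis by (simp add: ell_def)
    next
      case False
      then show ?thesis using s(1) by (simp add: A_def)
    qed
  qed
  then have "ell s \<eta> = P" using upper[OF ms] by simp
  note ch = Sg_char2[OF bb eta]
  have sS: "s \<in> Sg \<phi> \<eta>" using ms \<open>ell s \<eta> = P\<close> ch by (simp add: P_def)
  then have neS: "Sg \<phi> \<eta> \<noteq> {}" by blast
  have SA: "Sg \<phi> \<eta> = A \<inter> {\<sigma>. ell \<sigma> \<eta> = P}" using ch by (auto simp: A_def P_def)
  have cS: "compact (Sg \<phi> \<eta>)" unfolding SA
    by (rule compact_Int_closed[OF cA cl_ell(2)])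
  have cvS: "convex (Sg \<phi> \<eta>)"
    unfolding convex_def ch
  proof (intro ballI allI impI)
    fix x y :: "real^3" and u v :: real
    assume x: "x \<in> {\<sigma>. minor \<phi> (- \<sigma> $ 1) (\<sigma> $ 2) (\<sigma> $ 3) \<and> ell \<sigma> \<eta> = pm \<phi> \<eta>}"
      and y: "y \<in> {\<sigma>. minor \<phi> (- \<sigma> $ 1) (\<sigma> $ 2) (\<sigma> $ 3) \<and> ell \<sigma> \<eta> = pm \<phi> \<eta>}"
      and uv: "0 \<le> u" "0 \<le> v" "u + v = 1"
    have lin: "ell (u *\<^sub>R x + v *\<^sub>R y) \<xi> = u * ell x \<xi> + v * ell y \<xi>" for \<xi>
      by (simp add: ell_def algebra_simps)
    have "minor \<phi> (- (u *\<^sub>R x + v *\<^sub>R y)$1) ((u *\<^sub>R x + v *\<^sub>R y)$2) ((u *\<^sub>R x + v *\<^sub>R y)$3)"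
      unfolding minor_def
    proof
      fix w :: complex assume w: "w \<in> sphere 0 1"
      have "ell x w \<le> \<phi> w" "ell y w \<le> \<phi> w" using x y w by (auto simp: minor_def ell_def)
      then have "u * ell x w + v * ell y w \<le> u * \<phi> w + v * \<phi> w"
        using uv by (intro add_mono mult_left_mono) auto
      moreover have "u * \<phi> w + v * \<phi> w = \<phi> w" using uv(3) by (metis distrib_right mult_1)
      ultimately have "ell (u *\<^sub>R x + v *\<^sub>R y) w \<le> \<phi> w" using lin by simp
      then show "- (u *\<^sub>R x + v *\<^sub>R y)$1 + (u *\<^sub>R x + v *\<^sub>R y)$2 * Re w + (u *\<^sub>R x + v *\<^sub>R y)$3 * Im w \<le> \<phi> w"
        by (simp add: ell_def)
    qed
    moreover have "ell (u *\<^sub>R x + v *\<^sub>R y) \<eta> = pm \<phi> \<eta>"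
      using lin x y uv(3) by (simp add: algebra_simps) (metis distrib_right mult_1)
    ultimately show "u *\<^sub>R x + v *\<^sub>R y \<in> {\<sigma>. minor \<phi> (- \<sigma> $ 1) (\<sigma> $ 2) (\<sigma> $ 3) \<and> ell \<sigma> \<eta> = pm \<phi> \<eta>}"
      by simp
  qed
  have "collinear (Sg \<phi> \<eta>)" by (rule Sg_collinear[OF bb eta neS])
  then obtain p q where "Sg \<phi> \<eta> = closed_segment p q"
    using compact_convex_collinear_segment[OF neS cS cvS] by blast
  then show ?thesis by blast
qed



definition EF :: "complex \<Rightarrow> real^3 \<Rightarrow> complex" where
  "EF \<eta> \<sigma> = \<i> * (\<eta> * of_real (ell \<sigma> \<eta>) + of_real (1 - (cmod \<eta>)\<^sup>2) * Complex (\<sigma>$2) (\<sigma>$3))"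

lemma EF_formula:
  "frechet_derivative Pi_proj (at (lift \<eta>)) (mcross (lift \<eta>) \<sigma>) = EF \<eta> \<sigma>"
proof -
  have l1: "(lift \<eta>)$1 = 1" by (simp add: lift_def)
  have fd: "frechet_derivative Pi_proj (at (lift \<eta>)) =
      (\<lambda>w. Complex (w$2 - (lift \<eta>)$2 * w$1) (w$3 - (lift \<eta>)$3 * w$1))"
    by (rule frechet_derivative_at[symmetric]) (rule Pi_proj_deriv[OF l1])
  show ?thesis
    unfolding fd mcross_eq EF_def ell_def cmod_power2
    by (simp add: lift_def complex_eq_iff algebra_simps power2_eq_square)
qed

lemma EF_neg: "EF \<eta> (- \<sigma>) = - EF \<eta> \<sigma>"
  by (simp add: EF_def ell_def complex_eq_iff algebra_simps)

lemma sel_mid_seg: "sel_mid (closed_segment p q) = midpoint p q"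
  unfolding sel_mid_def
proof (rule the_equality)
  show "\<exists>p' q'. closed_segment p q = closed_segment p' q' \<and> midpoint p q = midpoint p' q'" by blast
next
  fix m assume "\<exists>p' q'. closed_segment p q = closed_segment p' q' \<and> m = midpoint p' q'"
  then obtain p' q' where "closed_segment p q = closed_segment p' q'" "m = midpoint p' q'" by blast
  then have "{p, q} = {p', q'}" "m = midpoint p' q'" by auto
  then show "m = midpoint p q" by (auto simp: doubleton_eq_iff midpoint_sym)
qed

lemma E_minus_EF:
  assumes "bb (phiX X)" "\<eta> \<in> ball 0 1"
  shows "E_minus X \<eta> = EF \<eta> (sel_mid (Sg (phiX X) \<eta>))"
    and "sel_mid (Sg (phiX X) \<eta>) \<in> Sg (phiX X) \<eta>"
proof -
  show "E_minus X \<eta> = EF \<eta> (sel_mid (Sg (phiX X) \<eta>))"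
    by (simp add: E_minus_def EF_formula Sigma_minus_Sg)
  obtain p q where "Sg (phiX X) \<eta> = closed_segment p q" using Sg_segment[OF assms] by blast
  then show "sel_mid (Sg (phiX X) \<eta>) \<in> Sg (phiX X) \<eta>" by (simp add: sel_mid_seg)
qed

lemma phi_plus_pm: "phi_plus X \<eta> = - pm (\<lambda>z. - phiX X z) \<eta>"
proof -
  define A where "A = {c + b1 * Re \<eta> + b2 * Im \<eta> | c b1 b2. \<forall>z\<in>sphere 0 1. c + b1 * Re z + b2 * Im z \<ge> phiX X z}"
  define B where "B = {c + b1 * Re \<eta> + b2 * Im \<eta> | c b1 b2. \<forall>z\<in>sphere 0 1. c + b1 * Re z + b2 * Im z \<le> - phiX X z}"
  have AB: "uminus ` A = B"
  proof (intro set_eqI iffI)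
    fix y assume "y \<in> uminus ` A"
    then obtain t where t: "t \<in> A" "y = - t" by (rule imageE)
    from t(1) obtain c b1 b2 where h: "t = c + b1 * Re \<eta> + b2 * Im \<eta>" "\<forall>z\<in>sphere 0 1. c + b1 * Re z + b2 * Im z \<ge> phiX X z"
      unfolding A_def by (simp only: mem_Collect_eq) (elim exE conjE, rule that, assumption+)
    have "y = (-c) + (-b1) * Re \<eta> + (-b2) * Im \<eta>" using h(1) t(2) by simp
    moreover have "\<forall>z\<in>sphere 0 1. (-c) + (-b1) * Re z + (-b2) * Im z \<le> - phiX X z"
    proof
      fix z :: complex assume "z \<in> sphere 0 1"
      then have "c + b1 * Re z + b2 * Im z \<ge> phiX X z" using h(2) by blast
      then show "(-c) + (-b1) * Re z + (-b2) * Im z \<le> - phiX X z" by linarith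
    qed
    ultimately show "y \<in> B" unfolding B_def by (intro CollectI exI conjI)
  next
    fix y assume "y \<in> B"
    then obtain c b1 b2 where h: "y = c + b1 * Re \<eta> + b2 * Im \<eta>" "\<forall>z\<in>sphere 0 1. c + b1 * Re z + b2 * Im z \<le> - phiX X z"
      unfolding B_def by (simp only: mem_Collect_eq) (elim exE conjE, rule that, assumption+)
    have "- y = (-c) + (-b1) * Re \<eta> + (-b2) * Im \<eta>" using h(1) by simp
    moreover have "\<forall>z\<in>sphere 0 1. (-c) + (-b1) * Re z + (-b2) * Im z \<ge> phiX X z"
    proof
      fix z :: complex assume "z \<in> sphere 0 1"
      then have "c + b1 * Re z + b2 * Im z \<le> - phiX X z" using h(2) by blast
      then show "(-c) + (-b1) * Re z + (-b2) * Im z \<ge> phiX X z" by linarith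
    qed
    ultimately have "- y \<in> A" unfolding A_def by (intro CollectI exI conjI)
    then have "- (- y) \<in> uminus ` A" by (rule imageI)
    then show "y \<in> uminus ` A" by simp
  qed
  have "phi_plus X \<eta> = Inf A" by (simp add: phi_plus_def A_def)
  also have "\<dots> = - Sup (uminus ` A)" by (rule Inf_real_def)
  also have "\<dots> = - pm (\<lambda>z. - phiX X z) \<eta>" unfolding AB B_def pm_def by (rule refl)
  finally show ?thesis .
qed

lemma Sigma_plus_Sg: "Sigma_plus X \<eta> = uminus ` Sg (\<lambda>z. - phiX X z) \<eta>"
proof -
  have m: "mink (lift \<xi>) (- \<sigma>) = - mink (lift \<xi>) \<sigma>" for \<xi> \<sigma> by (simp add: mink_lift)
  have "Sigma_plus X \<eta> = {\<sigma>. - \<sigma> \<in> Sg (\<lambda>z. - phiX X z) \<eta>}"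
    by (auto simp: Sigma_plus_def Sg_def phi_plus_pm m)
  also have "\<dots> = uminus ` Sg (\<lambda>z. - phiX X z) \<eta>"
    by (auto simp: image_iff) (metis minus_minus)
  finally show ?thesis .
qed

lemma E_plus_EF:
  assumes "bb (\<lambda>z. - phiX X z)" "\<eta> \<in> ball 0 1"
  shows "E_plus X \<eta> = - EF \<eta> (sel_mid (Sg (\<lambda>z. - phiX X z) \<eta>))"
    and "sel_mid (Sg (\<lambda>z. - phiX X z) \<eta>) \<in> Sg (\<lambda>z. - phiX X z) \<eta>"
proof -
  obtain p q where pq: "Sg (\<lambda>z. - phiX X z) \<eta> = closed_segment p q" using Sg_segment[OF assms] by blast
  have "Sigma_plus X \<eta> = closed_segment (-p) (-q)"
    unfolding Sigma_plus_Sg pq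
    by (rule closed_segment_linear_image[OF linear_uminus, symmetric])
  then have "sel_mid (Sigma_plus X \<eta>) = - midpoint p q" by (simp add: sel_mid_seg midpoint_def scaleR_diff_right flip: scaleR_minus_right)
  then show "E_plus X \<eta> = - EF \<eta> (sel_mid (Sg (\<lambda>z. - phiX X z) \<eta>))"
    by (simp add: E_plus_def EF_formula pq sel_mid_seg EF_neg)
  show "sel_mid (Sg (\<lambda>z. - phiX X z) \<eta>) \<in> Sg (\<lambda>z. - phiX X z) \<eta>" by (simp add: pq sel_mid_seg)
qed



lemma Sg_le_at:
  assumes "\<sigma> \<in> Sg \<phi> \<eta>" "p \<in> ball 0 1"
  shows "- \<sigma>$1 + \<sigma>$2 * Re p + \<sigma>$3 * Im p \<le> pm \<phi> p"
  using assms by (auto simp: Sg_def mink_lift)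

lemma Sg_eq_at:
  assumes "\<sigma> \<in> Sg \<phi> \<eta>"
  shows "ell \<sigma> \<eta> = pm \<phi> \<eta>"
  using assms by (auto simp: Sg_def mink_lift ell_def)

lemma EF_conv:
  fixes F :: "'a filter" and \<eta> :: "'a \<Rightarrow> complex" and \<sigma> :: "'a \<Rightarrow> real^3" and \<rho> :: "'a \<Rightarrow> real"
  assumes lim_eta: "(\<eta> \<longlongrightarrow> z) F"
    and in_sg: "eventually (\<lambda>i. \<eta> i \<in> ball 0 1 \<and> \<sigma> i \<in> Sg \<phi> (\<eta> i)) F"
    and lim_pm: "((\<lambda>i. pm \<phi> (\<eta> i)) \<longlongrightarrow> \<phi> z) F"
    and K: "K > 0"
    and rho: "eventually (\<lambda>i. \<rho> i > 0 \<and> 1 - cmod (\<eta> i) \<le> K * \<rho> i \<and> cmod (\<eta> i) + \<rho> i < 1) F"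
    and up: "\<And>e. e > 0 \<Longrightarrow> eventually (\<lambda>i. pm \<phi> (\<eta> i + of_real (\<rho> i)) \<le> \<phi> z + e
        \<and> pm \<phi> (\<eta> i - of_real (\<rho> i)) \<le> \<phi> z + e \<and> pm \<phi> (\<eta> i + \<i> * of_real (\<rho> i)) \<le> \<phi> z + e
        \<and> pm \<phi> (\<eta> i - \<i> * of_real (\<rho> i)) \<le> \<phi> z + e) F"
  shows "((\<lambda>i. EF (\<eta> i) (\<sigma> i)) \<longlongrightarrow> \<i> * (z * of_real (\<phi> z))) F"
proof -
  define R where "R i = of_real (1 - (cmod (\<eta> i))\<^sup>2) * Complex (\<sigma> i$2) (\<sigma> i$3)" for i
  have R0: "(R \<longlongrightarrow> 0) F"
    unfolding tendsto_iff
  proof (intro allI impI)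
    fix \<epsilon> :: real assume \<epsilon>: "\<epsilon> > 0"
    define e where "e = \<epsilon> / (16 * K)"
    have e0: "e > 0" using \<epsilon> K by (simp add: e_def)
    have lo: "eventually (\<lambda>i. \<phi> z - e < pm \<phi> (\<eta> i)) F"
      using lim_pm e0 by (auto simp: tendsto_iff dist_real_def elim!: eventually_mono)
    show "eventually (\<lambda>i. dist (R i) 0 < \<epsilon>) F"
      using in_sg rho up[OF e0] lo
    proof eventually_elim
      case (elim i)
      let ?h = "\<eta> i" and ?s = "\<sigma> i" and ?r = "\<rho> i"
      have hb: "?h \<in> ball 0 1" "?s \<in> Sg \<phi> ?h" using elim(1) by auto
      have r: "?r > 0" "1 - cmod ?h \<le> K * ?r" "cmod ?h + ?r < 1" using elim(2) by auto
      note P = pts_in_ball[OF r(3) less_imp_le[OF r(1)]]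
      have q: "- ?s$1 + ?s$2 * Re p + ?s$3 * Im p \<le> \<phi> z + e"
        if "p \<in> {?h + of_real ?r, ?h - of_real ?r, ?h + \<i> * of_real ?r, ?h - \<i> * of_real ?r}" for p
      proof -
        have "p \<in> ball 0 1" using that P by auto
        from Sg_le_at[OF hb(2) this] have "- ?s$1 + ?s$2 * Re p + ?s$3 * Im p \<le> pm \<phi> p" .
        moreover have "pm \<phi> p \<le> \<phi> z + e" using that elim(3) by auto
        ultimately show ?thesis by linarith
      qed
      have gb: "?r * \<bar>?s$2\<bar> \<le> \<phi> z + e - (- ?s$1 + ?s$2 * Re ?h + ?s$3 * Im ?h)"
          "?r * \<bar>?s$3\<bar> \<le> \<phi> z + e - (- ?s$1 + ?s$2 * Re ?h + ?s$3 * Im ?h)"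
        by (rule grad_bound; rule q; simp)+
      have ell: "- ?s$1 + ?s$2 * Re ?h + ?s$3 * Im ?h = pm \<phi> ?h" using Sg_eq_at[OF hb(2)] by (simp add: ell_def)
      have g2: "?r * (\<bar>?s$2\<bar> + \<bar>?s$3\<bar>) \<le> 4 * e" using gb ell elim(4) by (simp add: algebra_simps)
      have hn: "cmod ?h < 1" using hb(1) by simp
      have f1: "1 - (cmod ?h)\<^sup>2 \<le> 2 * (1 - cmod ?h)"
      proof -
        have "1 - (cmod ?h)\<^sup>2 = (1 - cmod ?h) * (1 + cmod ?h)" by (simp add: power2_eq_square algebra_simps)
        also have "\<dots> \<le> (1 - cmod ?h) * 2" using hn by (intro mult_left_mono) auto
        finally show ?thesis by simp
      qed
      have f0: "0 \<le> 1 - (cmod ?h)\<^sup>2" using hn by (simp add: abs_square_le_1)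
      have "cmod (R i) = (1 - (cmod ?h)\<^sup>2) * cmod (Complex (?s$2) (?s$3))"
        unfolding R_def norm_mult norm_of_real using f0 by simp
      also have "\<dots> \<le> (1 - (cmod ?h)\<^sup>2) * (\<bar>?s$2\<bar> + \<bar>?s$3\<bar>)"
        using f0 cmod_le[of "Complex (?s$2) (?s$3)"] by (intro mult_left_mono) auto
      also have "\<dots> \<le> (2 * (1 - cmod ?h)) * (\<bar>?s$2\<bar> + \<bar>?s$3\<bar>)"
        using f1 by (intro mult_right_mono) auto
      also have "\<dots> \<le> (2 * (K * ?r)) * (\<bar>?s$2\<bar> + \<bar>?s$3\<bar>)"
        using r(2) by (intro mult_right_mono) auto
      also have "\<dots> = 2 * K * (?r * (\<bar>?s$2\<bar> + \<bar>?s$3\<bar>))" by (simp add: algebra_simps)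
      also have "\<dots> \<le> 2 * K * (4 * e)" using g2 K by (intro mult_left_mono) auto
      also have "\<dots> = \<epsilon> / 2" using K by (simp add: e_def)
      also have "\<dots> < \<epsilon>" using \<epsilon> by simp
      finally show "dist (R i) 0 < \<epsilon>" by simp
    qed
  qed
  have lim: "((\<lambda>i. \<i> * (\<eta> i * of_real (pm \<phi> (\<eta> i)) + R i)) \<longlongrightarrow> \<i> * (z * of_real (\<phi> z) + 0)) F"
    by (intro tendsto_intros lim_eta lim_pm R0)
  have ev: "eventually (\<lambda>i. \<i> * (\<eta> i * of_real (pm \<phi> (\<eta> i)) + R i) = EF (\<eta> i) (\<sigma> i)) F"
    using in_sg by eventually_elim (auto simp: EF_def R_def Sg_eq_at)
  show ?thesis using Lim_transform_eventually[OF lim ev] by simp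
qed



lemma lsc_lscat:
  assumes "lsc_on (sphere 0 1) \<phi>" "z \<in> sphere 0 1"
  shows "lscat \<phi> z"
  unfolding lscat_def
proof (intro allI impI)
  fix e :: real assume e: "e > 0"
  have "openin (top_of_set (sphere 0 1)) {w \<in> sphere 0 1. \<phi> z - e < \<phi> w}"
    using assms(1) by (simp add: lsc_on_def)
  moreover have "z \<in> {w \<in> sphere 0 1. \<phi> z - e < \<phi> w}" using assms(2) e by simp
  ultimately obtain d where "d > 0" "\<forall>x'\<in>sphere 0 1. dist x' z < d \<longrightarrow> x' \<in> {w \<in> sphere 0 1. \<phi> z - e < \<phi> w}"
    unfolding openin_euclidean_subtopology_iff by meson
  then show "\<exists>\<delta>>0. \<forall>w\<in>sphere 0 1. cmod (w - z) < \<delta> \<longrightarrow> \<phi> z - e < \<phi> w"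
    by (auto simp: dist_norm)
qed

lemma lsc_bb:
  assumes "lsc_on (sphere 0 1) \<phi>"
  shows "bb \<phi>"
proof -
  have "\<forall>z\<in>sphere 0 1. \<exists>\<delta>>0. \<forall>w\<in>sphere 0 1. cmod (w - z) < \<delta> \<longrightarrow> \<phi> z - 1 < \<phi> w"
    using lsc_lscat[OF assms] unfolding lscat_def by (meson zero_less_one)
  then obtain \<delta> where d: "\<And>z. z \<in> sphere 0 1 \<Longrightarrow> \<delta> z > 0"
    "\<And>z w. z \<in> sphere 0 1 \<Longrightarrow> w \<in> sphere 0 1 \<Longrightarrow> cmod (w - z) < \<delta> z \<Longrightarrow> \<phi> z - 1 < \<phi> w"
    by metis
  have cov: "sphere (0::complex) 1 \<subseteq> (\<Union>c\<in>sphere 0 1. ball c (\<delta> c))"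
    using d(1) by force
  obtain C where C: "C \<subseteq> sphere 0 1" "finite C" "sphere (0::complex) 1 \<subseteq> (\<Union>c\<in>C. ball c (\<delta> c))"
    using compactE_image[OF compact_sphere _ cov] by blast
  show ?thesis
  proof (cases "C = {}")
    case True
    then show ?thesis using C(3) by (auto simp: bb_def)
  next
    case False
    define m where "m = Min ((\<lambda>c. \<phi> c - 1) ` C)"
    have "\<forall>w\<in>sphere 0 1. m \<le> \<phi> w"
    proof
      fix w :: complex assume w: "w \<in> sphere 0 1"
      then obtain c where c: "c \<in> C" "w \<in> ball c (\<delta> c)" using C(3) by blast
      then have "\<phi> c - 1 < \<phi> w" using d(2)[of c w] C(1) w by (auto simp: dist_norm norm_minus_commute)
      moreover have "m \<le> \<phi> c - 1" unfolding m_def using c(1) C(2) by (intro Min_le) auto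
      ultimately show "m \<le> \<phi> w" by linarith
    qed
    then show ?thesis by (auto simp: bb_def)
  qed
qed

lemma usc_lsc:
  assumes "usc_on S \<phi>"
  shows "lsc_on S (\<lambda>z. - \<phi> z)"
proof -
  have "{z \<in> S. a < - \<phi> z} = {z \<in> S. \<phi> z < - a}" for a by auto
  then show ?thesis using assms by (simp add: lsc_on_def usc_on_def)
qed

lemma cont_lsc:
  assumes "continuous_on (sphere 0 1) X"
  shows "lsc_on (sphere 0 1) (phiX X)" "lsc_on (sphere 0 1) (\<lambda>z. - phiX X z)"
proof -
  have c: "continuous_on (sphere 0 1) (phiX X)"
    unfolding phiX_def[abs_def]
    by (intro continuous_intros assms) auto
  have "openin (top_of_set (sphere 0 1)) (sphere 0 1 \<inter> phiX X -` {a<..})" for a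
    by (rule continuous_openin_preimage_gen[OF c]) simp
  moreover have "sphere 0 1 \<inter> phiX X -` {a<..} = {z \<in> sphere 0 1. a < phiX X z}" for a by auto
  ultimately show "lsc_on (sphere 0 1) (phiX X)" by (simp add: lsc_on_def)
  have "openin (top_of_set (sphere 0 1)) (sphere 0 1 \<inter> phiX X -` {..<a})" for a
    by (rule continuous_openin_preimage_gen[OF c]) simp
  moreover have "sphere 0 1 \<inter> phiX X -` {..<a} = {z \<in> sphere 0 1. phiX X z < a}" for a by auto
  ultimately have "usc_on (sphere 0 1) (phiX X)" by (simp add: usc_on_def)
  then show "lsc_on (sphere 0 1) (\<lambda>z. - phiX X z)" by (rule usc_lsc)
qed

lemma tangent_eq:
  assumes "tangent_field X" "z \<in> sphere 0 1"
  shows "X z = \<i> * (z * of_real (phiX X z))"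
proof -
  have r: "X z / (\<i> * z) \<in> \<real>" using assms by (simp add: tangent_field_def)
  have nz: "\<i> * z \<noteq> 0" using assms(2) by auto
  have "of_real (phiX X z) = X z / (\<i> * z)"
    using r by (simp add: phiX_def complex_is_Real_iff complex_eq_iff)
  then show ?thesis using nz by (simp add: field_simps)
qed

lemma sel_mid_in:
  assumes "bb \<phi>" "\<eta> \<in> ball 0 1"
  shows "sel_mid (Sg \<phi> \<eta>) \<in> Sg \<phi> \<eta>"
proof -
  obtain p q where "Sg \<phi> \<eta> = closed_segment p q" using Sg_segment[OF assms] by blast
  then show ?thesis by (simp add: sel_mid_seg)
qed



lemma radial_EF:
  assumes lsc: "lsc_on (sphere 0 1) \<phi>" and z: "z \<in> sphere 0 1" and x: "x \<in> ball 0 1"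
  shows "((\<lambda>s::real. EF ((1 - of_real s) * z + of_real s * x)
            (sel_mid (Sg \<phi> ((1 - of_real s) * z + of_real s * x)))) \<longlongrightarrow> \<i> * (z * of_real (\<phi> z))) (at_right 0)"
proof -
  define \<eta> where "\<eta> s = (1 - of_real s) * z + of_real s * x" for s :: real
  have bb: "bb \<phi>" using lsc_bb[OF lsc] .
  have lz: "lscat \<phi> z" using lsc_lscat[OF lsc z] .
  have zn: "cmod z = 1" using z by simp
  have xn: "cmod x < 1" using x by simp
  define r where "r = (1 - cmod x) / 2"
  have r0: "r > 0" using xn by (simp add: r_def)
  have xr: "cmod x + r < 1" using xn by (simp add: r_def field_simps)
  note Px = pts_in_ball[OF xr less_imp_le[OF r0]]
  have eta_conv: "\<eta> s = of_real (1 - s) * z + of_real (1 - (1 - s)) * y + of_real s * (x - y)" for s y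
    by (simp add: \<eta>_def algebra_simps)
  have ev01: "eventually (\<lambda>s::real. 0 < s \<and> s < 1) (at_right 0)"
    using eventually_at_right_real[of 0 1] by (auto elim!: eventually_mono)
  have nrm: "cmod (\<eta> s) \<le> (1 - s) + s * cmod x" if "0 < s" "s < 1" for s
  proof -
    have "cmod (\<eta> s) \<le> cmod ((1 - of_real s) * z) + cmod (of_real s * x)"
      unfolding \<eta>_def by (rule norm_triangle_ineq)
    also have "cmod ((1 - of_real s) * z) = 1 - s"
    proof -
      have "(1 - of_real s) * z = of_real (1 - s) * z" by simp
      then have "cmod ((1 - of_real s) * z) = \<bar>1 - s\<bar> * cmod z" by (metis norm_mult norm_of_real)
      then show ?thesis using that zn by simp
    qed
    also have "cmod (of_real s * x) = s * cmod x" using that by (simp add: norm_mult)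
    finally show ?thesis .
  qed
  have inball: "\<eta> s \<in> ball 0 1" if "0 < s" "s < 1" for s
  proof -
    have "s * cmod x < s * 1" using that xn by (intro mult_strict_left_mono) auto
    then show ?thesis using nrm[OF that] by simp
  qed
  have lim_eta: "(\<eta> \<longlongrightarrow> z) (at_right 0)"
  proof -
    have "((\<lambda>s::real. (1 - of_real s) * z + of_real s * x) \<longlongrightarrow> (1 - of_real 0) * z + of_real 0 * x) (at_right 0)"
      by (intro tendsto_intros)
    then show ?thesis by (simp add: \<eta>_def[abs_def])
  qed
  have cvx: "pm \<phi> (of_real (1 - s) * z + of_real (1 - (1 - s)) * q) \<le> (1 - s) * \<phi> z + s * pm \<phi> q"
    if "0 < s" "s < 1" "cmod q \<le> 1" for s q
  proof -
    have "pm \<phi> (of_real (1 - s) * z + of_real (1 - (1 - s)) * q) \<le> (1 - s) * pm \<phi> z + (1 - (1 - s)) * pm \<phi> q"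
      using that zn by (intro pm_convex[OF bb]) auto
    moreover have "(1 - s) * pm \<phi> z \<le> (1 - s) * \<phi> z"
      using pm_le_phi[OF bb z] that by (intro mult_left_mono) auto
    ultimately show ?thesis by simp
  qed
  have pt: "\<eta> s + c = of_real (1 - s) * z + of_real (1 - (1 - s)) * (x + c / of_real s)" if "s > 0" for s c
    using that by (simp add: \<eta>_def algebra_simps)
  have lim_pm: "((\<lambda>s. pm \<phi> (\<eta> s)) \<longlongrightarrow> \<phi> z) (at_right 0)"
    unfolding tendsto_iff dist_real_def
  proof (intro allI impI)
    fix e :: real assume e: "e > 0"
    obtain \<delta> where d: "\<delta> > 0" "\<And>\<xi>. cmod \<xi> \<le> 1 \<Longrightarrow> cmod (\<xi> - z) < \<delta> \<Longrightarrow> \<phi> z - e/2 \<le> pm \<phi> \<xi>"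
      using pm_lower[OF bb z _ lz, of "e/2"] e by auto
    have e1: "eventually (\<lambda>s. cmod (\<eta> s - z) < \<delta>) (at_right 0)"
      using lim_eta d(1) by (auto simp: tendsto_iff dist_norm)
    define A where "A = \<bar>pm \<phi> x - \<phi> z\<bar> + 1"
    have A0: "A > 0" by (simp add: A_def)
    have e2: "eventually (\<lambda>s::real. 0 < s \<and> s < min 1 (e / (2 * A))) (at_right 0)"
      using eventually_at_right_real[of 0 "min 1 (e / (2 * A))"] e A0 by (auto elim!: eventually_mono)
    show "eventually (\<lambda>s. \<bar>pm \<phi> (\<eta> s) - \<phi> z\<bar> < e) (at_right 0)"
      using e1 e2
    proof eventually_elim
      case (elim s)
      have s: "0 < s" "s < 1" using elim(2) by auto
      have lo: "\<phi> z - e/2 \<le> pm \<phi> (\<eta> s)" using d(2) elim(1) inball[OF s] by auto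
      have "\<eta> s = of_real (1 - s) * z + of_real (1 - (1 - s)) * x" by (simp add: \<eta>_def)
      then have "pm \<phi> (\<eta> s) \<le> (1 - s) * \<phi> z + s * pm \<phi> x" using cvx[OF s, of x] xn by simp
      moreover have "s * (pm \<phi> x - \<phi> z) \<le> s * A" using s by (intro mult_left_mono) (auto simp: A_def)
      moreover have "s * A < e / 2"
      proof -
        have "s < e / (2 * A)" using elim(2) by simp
        then show ?thesis using A0 by (simp add: field_simps)
      qed
      ultimately have "pm \<phi> (\<eta> s) < \<phi> z + e/2" by (simp add: algebra_simps)
      then show ?case using lo e by auto
    qed
  qed
  define \<rho> where "\<rho> s = s * r" for s
  define K where "K = 2 / r"
  have K0: "K > 0" using r0 by (simp add: K_def)
  have rho: "eventually (\<lambda>s. \<rho> s > 0 \<and> 1 - cmod (\<eta> s) \<le> K * \<rho> s \<and> cmod (\<eta> s) + \<rho> s < 1) (at_right 0)"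
    using ev01
  proof eventually_elim
    case (elim s)
    have s: "0 < s" "s < 1" using elim by auto
    have "\<rho> s > 0" using s r0 by (simp add: \<rho>_def)
    moreover have "1 - cmod (\<eta> s) \<le> K * \<rho> s"
    proof -
      have "1 - cmod (\<eta> s) \<le> cmod (z - \<eta> s)" using zn norm_triangle_ineq2[of z "\<eta> s"] by simp
      also have "z - \<eta> s = of_real s * (z - x)" by (simp add: \<eta>_def algebra_simps)
      also have "cmod \<dots> = s * cmod (z - x)" using s by (simp add: norm_mult)
      also have "\<dots> \<le> s * 2"
      proof -
        have "cmod (z - x) \<le> cmod z + cmod x" by (rule norm_triangle_ineq4)
        then have "cmod (z - x) \<le> 2" using zn xn by simp
        then show ?thesis using s by (intro mult_left_mono) auto
      qed
      also have "\<dots> = K * \<rho> s" using r0 by (simp add: K_def \<rho>_def)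
      finally show ?thesis .
    qed
    moreover have "cmod (\<eta> s) + \<rho> s < 1"
    proof -
      have "s * (cmod x + r) < s * 1" using s xr by (intro mult_strict_left_mono) auto
      then show ?thesis using nrm[OF s] by (simp add: \<rho>_def algebra_simps)
    qed
    ultimately show ?case by blast
  qed
  define M where "M = Max (pm \<phi> ` {x + of_real r, x - of_real r, x + \<i> * of_real r, x - \<i> * of_real r})"
  have Mge: "pm \<phi> p \<le> M" if "p \<in> {x + of_real r, x - of_real r, x + \<i> * of_real r, x - \<i> * of_real r}" for p
    unfolding M_def by (rule Max_ge) (use that in auto)
  have up: "eventually (\<lambda>s. pm \<phi> (\<eta> s + of_real (\<rho> s)) \<le> \<phi> z + e
        \<and> pm \<phi> (\<eta> s - of_real (\<rho> s)) \<le> \<phi> z + e \<and> pm \<phi> (\<eta> s + \<i> * of_real (\<rho> s)) \<le> \<phi> z + e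
        \<and> pm \<phi> (\<eta> s - \<i> * of_real (\<rho> s)) \<le> \<phi> z + e) (at_right 0)" if e: "e > 0" for e
  proof -
    define A where "A = \<bar>M - \<phi> z\<bar> + 1"
    have A0: "A > 0" by (simp add: A_def)
    have e2: "eventually (\<lambda>s::real. 0 < s \<and> s < min 1 (e / A)) (at_right 0)"
      using eventually_at_right_real[of 0 "min 1 (e / A)"] e A0 by (auto elim!: eventually_mono)
    show ?thesis using e2
    proof eventually_elim
      case (elim s)
      have s: "0 < s" "s < 1" using elim by auto
      have sA: "s * A \<le> e"
      proof -
        have "s < e / A" using elim by simp
        then show ?thesis using A0 by (simp add: field_simps)
      qed
      have gen: "pm \<phi> (\<eta> s + of_real s * c) \<le> \<phi> z + e"
        if c: "x + c \<in> {x + of_real r, x - of_real r, x + \<i> * of_real r, x - \<i> * of_real r}" for c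
      proof -
        have cb: "cmod (x + c) \<le> 1" using c Px by auto
        have "\<eta> s + of_real s * c = of_real (1 - s) * z + of_real (1 - (1 - s)) * (x + c)"
          by (simp add: \<eta>_def algebra_simps)
        then have "pm \<phi> (\<eta> s + of_real s * c) \<le> (1 - s) * \<phi> z + s * pm \<phi> (x + c)"
          using cvx[OF s cb] by simp
        moreover have "s * pm \<phi> (x + c) \<le> s * M" using Mge[OF c] s by (intro mult_left_mono) auto
        moreover have "s * (M - \<phi> z) \<le> s * A" using s by (intro mult_left_mono) (auto simp: A_def)
        ultimately show ?thesis using sA by (simp add: algebra_simps)
      qed
      have "pm \<phi> (\<eta> s + of_real s * of_real r) \<le> \<phi> z + e" by (rule gen) simp
      moreover have "pm \<phi> (\<eta> s + of_real s * (- of_real r)) \<le> \<phi> z + e" by (rule gen) simp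
      moreover have "pm \<phi> (\<eta> s + of_real s * (\<i> * of_real r)) \<le> \<phi> z + e" by (rule gen) simp
      moreover have "pm \<phi> (\<eta> s + of_real s * (- (\<i> * of_real r))) \<le> \<phi> z + e" by (rule gen) simp
      ultimately show ?case by (simp add: \<rho>_def algebra_simps)
    qed
  qed
  have in_sg: "eventually (\<lambda>s. \<eta> s \<in> ball 0 1 \<and> sel_mid (Sg \<phi> (\<eta> s)) \<in> Sg \<phi> (\<eta> s)) (at_right 0)"
    using ev01 by eventually_elim (use inball sel_mid_in[OF bb] in blast)
  have "((\<lambda>s. EF (\<eta> s) (sel_mid (Sg \<phi> (\<eta> s)))) \<longlongrightarrow> \<i> * (z * of_real (\<phi> z))) (at_right 0)"
    by (rule EF_conv[OF lim_eta in_sg lim_pm K0 rho up])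
  then show ?thesis by (simp add: \<eta>_def)
qed



lemma seq_EF:
  assumes lsc: "lsc_on (sphere 0 1) \<phi>" and lsc2: "lsc_on (sphere 0 1) (\<lambda>w. - \<phi> w)"
    and z: "z \<in> sphere 0 1" and inb: "\<And>n. \<eta> n \<in> ball 0 1" and lim_eta: "\<eta> \<longlonglongrightarrow> z"
  shows "(\<lambda>n. EF (\<eta> n) (sel_mid (Sg \<phi> (\<eta> n)))) \<longlonglongrightarrow> \<i> * (z * of_real (\<phi> z))"
proof -
  have bb: "bb \<phi>" using lsc_bb[OF lsc] .
  have bb2: "bb (\<lambda>w. - \<phi> w)" using lsc_bb[OF lsc2] .
  have lz: "lscat \<phi> z" using lsc_lscat[OF lsc z] .
  have lz2: "lscat (\<lambda>w. - \<phi> w) z" using lsc_lscat[OF lsc2 z] .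
  have zn: "cmod z = 1" using z by simp
  define \<rho> where "\<rho> n = (1 - cmod (\<eta> n)) / 2" for n
  have hn: "cmod (\<eta> n) < 1" for n using inb[of n] by simp
  have dist_ev: "eventually (\<lambda>n. cmod (\<eta> n - z) < d) sequentially" if "d > 0" for d
    using lim_eta that by (auto simp: tendsto_iff dist_norm)
  have lim_pm: "(\<lambda>n. pm \<phi> (\<eta> n)) \<longlonglongrightarrow> \<phi> z"
    unfolding tendsto_iff dist_real_def
  proof (intro allI impI)
    fix e :: real assume e: "e > 0"
    obtain d1 where d1: "d1 > 0" "\<And>\<xi>. cmod \<xi> \<le> 1 \<Longrightarrow> cmod (\<xi> - z) < d1 \<Longrightarrow> \<phi> z - e/2 \<le> pm \<phi> \<xi>"
      using pm_lower[OF bb z _ lz, of "e/2"] e by auto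
    obtain d2 where d2: "d2 > 0" "\<And>\<xi>. cmod \<xi> \<le> 1 \<Longrightarrow> cmod (\<xi> - z) < d2 \<Longrightarrow> pm \<phi> \<xi> \<le> \<phi> z + e/2"
      using pm_upper_near[OF bb bb2 z _ lz2, of "e/2"] e by auto
    show "eventually (\<lambda>n. \<bar>pm \<phi> (\<eta> n) - \<phi> z\<bar> < e) sequentially"
    proof -
      have "eventually (\<lambda>n. cmod (\<eta> n - z) < min d1 d2) sequentially"
        by (rule dist_ev) (use d1(1) d2(1) in simp)
      then show ?thesis
    proof (elim eventually_mono)
      fix n assume a: "cmod (\<eta> n - z) < min d1 d2"
      have "\<phi> z - e/2 \<le> pm \<phi> (\<eta> n)" using d1(2)[of "\<eta> n"] a hn[of n] by simp
      moreover have "pm \<phi> (\<eta> n) \<le> \<phi> z + e/2" using d2(2)[of "\<eta> n"] a hn[of n] by simp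
      ultimately show "\<bar>pm \<phi> (\<eta> n) - \<phi> z\<bar> < e" using e by auto
    qed
    qed
  qed
  have K0: "(2::real) > 0" by simp
  have rho: "eventually (\<lambda>n. \<rho> n > 0 \<and> 1 - cmod (\<eta> n) \<le> 2 * \<rho> n \<and> cmod (\<eta> n) + \<rho> n < 1) sequentially"
    using hn by (auto simp: \<rho>_def field_simps)
  have up: "eventually (\<lambda>n. pm \<phi> (\<eta> n + of_real (\<rho> n)) \<le> \<phi> z + e
        \<and> pm \<phi> (\<eta> n - of_real (\<rho> n)) \<le> \<phi> z + e \<and> pm \<phi> (\<eta> n + \<i> * of_real (\<rho> n)) \<le> \<phi> z + e
        \<and> pm \<phi> (\<eta> n - \<i> * of_real (\<rho> n)) \<le> \<phi> z + e) sequentially" if e: "e > 0" for e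
  proof -
    obtain d where d: "d > 0" "\<And>\<xi>. cmod \<xi> \<le> 1 \<Longrightarrow> cmod (\<xi> - z) < d \<Longrightarrow> pm \<phi> \<xi> \<le> \<phi> z + e"
      using pm_upper_near[OF bb bb2 z e lz2] by auto
    have "eventually (\<lambda>n. cmod (\<eta> n - z) < d/2) sequentially"
      by (rule dist_ev) (use d(1) in simp)
    then show ?thesis
    proof (elim eventually_mono)
      fix n assume a: "cmod (\<eta> n - z) < d/2"
      have r0: "\<rho> n \<ge> 0" "cmod (\<eta> n) + \<rho> n < 1" using hn[of n] by (auto simp: \<rho>_def field_simps)
      note P = pts_in_ball[OF r0(2) r0(1)]
      have rle: "\<rho> n \<le> cmod (\<eta> n - z) / 2"
      proof -
        have "1 - cmod (\<eta> n) \<le> cmod (z - \<eta> n)" using zn norm_triangle_ineq2[of z "\<eta> n"] by simp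
        then show ?thesis by (simp add: \<rho>_def norm_minus_commute)
      qed
      have gen: "pm \<phi> (\<eta> n + c) \<le> \<phi> z + e" if "cmod c = \<rho> n" "\<eta> n + c \<in> ball 0 1" for c
      proof (rule d(2))
        show "cmod (\<eta> n + c) \<le> 1" using that(2) by simp
        have "cmod (\<eta> n + c - z) \<le> cmod (\<eta> n - z) + cmod c"
          using norm_triangle_ineq[of "\<eta> n - z" c] by (simp add: algebra_simps)
        then show "cmod (\<eta> n + c - z) < d" using that(1) rle a d(1) by linarith
      qed
      have "pm \<phi> (\<eta> n + of_real (\<rho> n)) \<le> \<phi> z + e" using gen[of "of_real (\<rho> n)"] P r0 by simp
      moreover have "pm \<phi> (\<eta> n + (- of_real (\<rho> n))) \<le> \<phi> z + e" using gen[of "- of_real (\<rho> n)"] P r0 by simp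
      moreover have "pm \<phi> (\<eta> n + \<i> * of_real (\<rho> n)) \<le> \<phi> z + e"
        using gen[of "\<i> * of_real (\<rho> n)"] P r0 by (simp add: norm_mult)
      moreover have "pm \<phi> (\<eta> n + (- (\<i> * of_real (\<rho> n)))) \<le> \<phi> z + e"
        using gen[of "- (\<i> * of_real (\<rho> n))"] P r0 by (simp add: norm_mult)
      ultimately show "pm \<phi> (\<eta> n + of_real (\<rho> n)) \<le> \<phi> z + e
        \<and> pm \<phi> (\<eta> n - of_real (\<rho> n)) \<le> \<phi> z + e \<and> pm \<phi> (\<eta> n + \<i> * of_real (\<rho> n)) \<le> \<phi> z + e
        \<and> pm \<phi> (\<eta> n - \<i> * of_real (\<rho> n)) \<le> \<phi> z + e" by simp
    qed
  qed
  have in_sg: "eventually (\<lambda>n. \<eta> n \<in> ball 0 1 \<and> sel_mid (Sg \<phi> (\<eta> n)) \<in> Sg \<phi> (\<eta> n)) sequentially"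
    using inb sel_mid_in[OF bb] by simp
  show ?thesis by (rule EF_conv[OF lim_eta in_sg lim_pm K0 rho up])
qed



theorem proposition1p5:
  fixes X :: "complex \<Rightarrow> complex"
  assumes "tangent_field X"
  shows "(continuous_on (sphere 0 1) X \<longrightarrow>
            extends_continuously (E_plus X) X \<and> extends_continuously (E_minus X) X)
       \<and> (lsc_on (sphere 0 1) (phiX X) \<longrightarrow> extends_radially (E_minus X) X)
       \<and> (usc_on (sphere 0 1) (phiX X) \<longrightarrow> extends_radially (E_plus X) X)"
proof -
  define \<psi> where "\<psi> = (\<lambda>z. - phiX X z)"
  have nn: "(\<lambda>w. - \<psi> w) = phiX X" by (simp add: \<psi>_def)
  have tan: "X z = \<i> * (z * of_real (phiX X z))" if "z \<in> sphere 0 1" for z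
    using tangent_eq[OF assms that] .
  have tanp: "X z = - (\<i> * (z * of_real (\<psi> z)))" if "z \<in> sphere 0 1" for z
    using tan[OF that] by (simp add: \<psi>_def)
  have minus_ok: "\<And>\<eta>. bb \<psi> \<Longrightarrow> \<eta> \<in> ball 0 1 \<Longrightarrow> E_plus X \<eta> = - EF \<eta> (sel_mid (Sg \<psi> \<eta>))"
    unfolding \<psi>_def by (rule E_plus_EF(1))
  have P1: "extends_continuously (E_plus X) X \<and> extends_continuously (E_minus X) X"
    if c: "continuous_on (sphere 0 1) X"
  proof -
    have l1: "lsc_on (sphere 0 1) (phiX X)" and l2: "lsc_on (sphere 0 1) \<psi>"
      using cont_lsc[OF c] by (simp_all add: \<psi>_def)
    have l3: "lsc_on (sphere 0 1) (\<lambda>w. - \<psi> w)" using l1 nn by simp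
    have l4: "lsc_on (sphere 0 1) (\<lambda>w. - phiX X w)" using l2 by (simp add: \<psi>_def)
    have b1: "bb (phiX X)" and b2: "bb \<psi>" using lsc_bb l1 l2 by auto
    show ?thesis
      unfolding extends_continuously_def
    proof (intro conjI ballI allI impI; elim conjE)
      fix z :: complex and \<eta> :: "nat \<Rightarrow> complex" assume z: "z \<in> sphere 0 1" and inb: "\<forall>n. \<eta> n \<in> ball 0 1"
        and lim: "\<eta> \<longlonglongrightarrow> z"
      have "(\<lambda>n. EF (\<eta> n) (sel_mid (Sg \<psi> (\<eta> n)))) \<longlonglongrightarrow> \<i> * (z * of_real (\<psi> z))"
        using seq_EF[OF l2 l3 z _ lim] inb by blast
      then have "(\<lambda>n. - EF (\<eta> n) (sel_mid (Sg \<psi> (\<eta> n)))) \<longlonglongrightarrow> - (\<i> * (z * of_real (\<psi> z)))"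
        by (rule tendsto_minus)
      moreover have "E_plus X (\<eta> n) = - EF (\<eta> n) (sel_mid (Sg \<psi> (\<eta> n)))" for n
        using minus_ok[OF b2] inb by blast
      ultimately show "(\<lambda>n. E_plus X (\<eta> n)) \<longlonglongrightarrow> X z" using tanp[OF z] by simp
    next
      fix z :: complex and \<eta> :: "nat \<Rightarrow> complex" assume z: "z \<in> sphere 0 1" and inb: "\<forall>n. \<eta> n \<in> ball 0 1"
        and lim: "\<eta> \<longlonglongrightarrow> z"
      have "(\<lambda>n. EF (\<eta> n) (sel_mid (Sg (phiX X) (\<eta> n)))) \<longlonglongrightarrow> \<i> * (z * of_real (phiX X z))"
        using seq_EF[OF l1 l4 z _ lim] inb by blast
      moreover have "E_minus X (\<eta> n) = EF (\<eta> n) (sel_mid (Sg (phiX X) (\<eta> n)))" for n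
        using E_minus_EF(1)[OF b1] inb by blast
      ultimately show "(\<lambda>n. E_minus X (\<eta> n)) \<longlonglongrightarrow> X z" using tan[OF z] by simp
    qed
  qed
  have P2: "extends_radially (E_minus X) X" if l1: "lsc_on (sphere 0 1) (phiX X)"
    unfolding extends_radially_def
  proof (intro ballI)
    fix z x :: complex assume z: "z \<in> sphere 0 1" and x: "x \<in> ball 0 1"
    have b1: "bb (phiX X)" using lsc_bb[OF l1] .
    define \<eta> where "\<eta> s = (1 - of_real s) * z + of_real s * x" for s :: real
    have lim: "((\<lambda>s. EF (\<eta> s) (sel_mid (Sg (phiX X) (\<eta> s)))) \<longlongrightarrow> X z) (at_right 0)"
      using radial_EF[OF l1 z x] tan[OF z] by (simp add: \<eta>_def)
    have ev: "eventually (\<lambda>s. EF (\<eta> s) (sel_mid (Sg (phiX X) (\<eta> s))) = E_minus X (\<eta> s)) (at_right 0)"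
    proof -
      have "eventually (\<lambda>s::real. s \<in> {0<..<1}) (at_right 0)" by (rule eventually_at_right_real) simp
      then show ?thesis
      proof (elim eventually_mono)
        fix s :: real assume s: "s \<in> {0<..<1}"
        have "cmod (\<eta> s) \<le> cmod ((1 - of_real s) * z) + cmod (of_real s * x)"
          unfolding \<eta>_def by (rule norm_triangle_ineq)
        also have "cmod ((1 - of_real s) * z) = 1 - s"
        proof -
          have "(1 - of_real s) * z = of_real (1 - s) * z" by simp
          then have "cmod ((1 - of_real s) * z) = \<bar>1 - s\<bar> * cmod z" by (metis norm_mult norm_of_real)
          then show ?thesis using s z by simp
        qed
        also have "cmod (of_real s * x) = s * cmod x" using s by (simp add: norm_mult)
        finally have "cmod (\<eta> s) \<le> 1 - s + s * cmod x" .
        moreover have "s * cmod x < s * 1" using s x by (intro mult_strict_left_mono) auto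
        ultimately have "cmod (\<eta> s) < 1" by linarith
        then have "\<eta> s \<in> ball 0 1" by simp
        then show "EF (\<eta> s) (sel_mid (Sg (phiX X) (\<eta> s))) = E_minus X (\<eta> s)"
          using E_minus_EF(1)[OF b1] by simp
      qed
    qed
    have "((\<lambda>s. E_minus X (\<eta> s)) \<longlongrightarrow> X z) (at_right 0)"
      by (rule Lim_transform_eventually[OF lim ev])
    then show "((\<lambda>s::real. E_minus X ((1 - of_real s) * z + of_real s * x)) \<longlongrightarrow> X z) (at_right 0)"
      by (simp add: \<eta>_def)
  qed
  have P3: "extends_radially (E_plus X) X" if u: "usc_on (sphere 0 1) (phiX X)"
    unfolding extends_radially_def
  proof (intro ballI)
    fix z x :: complex assume z: "z \<in> sphere 0 1" and x: "x \<in> ball 0 1"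
    have l2: "lsc_on (sphere 0 1) \<psi>" using usc_lsc[OF u] by (simp add: \<psi>_def)
    have b2: "bb \<psi>" using lsc_bb[OF l2] .
    define \<eta> where "\<eta> s = (1 - of_real s) * z + of_real s * x" for s :: real
    have "((\<lambda>s. EF (\<eta> s) (sel_mid (Sg \<psi> (\<eta> s)))) \<longlongrightarrow> \<i> * (z * of_real (\<psi> z))) (at_right 0)"
      using radial_EF[OF l2 z x] by (simp add: \<eta>_def)
    then have lim: "((\<lambda>s. - EF (\<eta> s) (sel_mid (Sg \<psi> (\<eta> s)))) \<longlongrightarrow> X z) (at_right 0)"
      using tanp[OF z] by (simp add: tendsto_minus_cancel_left[symmetric])
    have ev: "eventually (\<lambda>s. - EF (\<eta> s) (sel_mid (Sg \<psi> (\<eta> s))) = E_plus X (\<eta> s)) (at_right 0)"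
    proof -
      have "eventually (\<lambda>s::real. s \<in> {0<..<1}) (at_right 0)" by (rule eventually_at_right_real) simp
      then show ?thesis
      proof (elim eventually_mono)
        fix s :: real assume s: "s \<in> {0<..<1}"
        have "cmod (\<eta> s) \<le> cmod ((1 - of_real s) * z) + cmod (of_real s * x)"
          unfolding \<eta>_def by (rule norm_triangle_ineq)
        also have "cmod ((1 - of_real s) * z) = 1 - s"
        proof -
          have "(1 - of_real s) * z = of_real (1 - s) * z" by simp
          then have "cmod ((1 - of_real s) * z) = \<bar>1 - s\<bar> * cmod z" by (metis norm_mult norm_of_real)
          then show ?thesis using s z by simp
        qed
        also have "cmod (of_real s * x) = s * cmod x" using s by (simp add: norm_mult)
        finally have "cmod (\<eta> s) \<le> 1 - s + s * cmod x" .
        moreover have "s * cmod x < s * 1" using s x by (intro mult_strict_left_mono) auto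
        ultimately have "cmod (\<eta> s) < 1" by linarith
        then have "\<eta> s \<in> ball 0 1" by simp
        then show "- EF (\<eta> s) (sel_mid (Sg \<psi> (\<eta> s))) = E_plus X (\<eta> s)"
          using minus_ok[OF b2] by simp
      qed
    qed
    have "((\<lambda>s. E_plus X (\<eta> s)) \<longlongrightarrow> X z) (at_right 0)"
      by (rule Lim_transform_eventually[OF lim ev])
    then show "((\<lambda>s::real. E_plus X ((1 - of_real s) * z + of_real s * x)) \<longlongrightarrow> X z) (at_right 0)"
      by (simp add: \<eta>_def)
  qed
  show ?thesis using P1 P2 P3 by blast
qed

end
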